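(* Let $\kappa>0$ and let $\sigma:\mathbf{R}\to\mathbf{R}$ be Lipschitz with $\sigma(0)=0$ and $\mathrm{L}_\sigma:=\inf_x|\sigma(x)/x|>0$. Let $u_0,v_0\in\mathcal{D}_{\mathit{exp}}$ with $u_0>0$ on a set of positive Lebesgue measure and $v_0\ge0$, and let $u$ be the mild solution of $\partial_t^2u_t(x)=\kappa^2\partial_x^2u_t(x)+\sigma(u_t(x))\,\partial^2_{tx}W(t,x)$ with initial position $u_0$ and initial velocity $v_0$. If $\beta>0$ and $$0<\alpha<\kappa-\frac{4\beta^2}{\mathrm{L}_\sigma^2},$$ then $\mathcal{M}_{\alpha,\beta}(u)=\infty$.
   Context: $W$ is a two-parameter Brownian sheet. With $\Gamma_t(x):=\frac12\mathbf{1}_{[-\kappa t,\kappa t]}(x)$, the mild solution is the predictable random field with $u_t(x)=\frac12(u_0(x+\kappa t)+u_0(x-\kappa t))+\frac{1}{2\kappa}\int_{x-\kappa t}^{x+\kappa t}v_0(y)\,dy+\int_{[0,t]\times\mathbf{R}}\Gamma_{t-s}(y-x)\sigma(u_s(y))\,W(ds\,dy)$. $\mathcal{D}_{\mathit{exp}}$ is the set of bounded lower semicontinuous $h:\mathbf{R}\to\mathbf{R}_+$ with $h(x)=O(e^{-\rho|x|})$ as $|x|\to\infty$ for some $\rho>0$. For a predictable random field $v$ and $\alpha,\beta>0$, $\mathcal{M}_{\alpha,\beta}(v):=\Big[\int_0^\infty e^{-\beta t}\int_{\{x:|x|\ge\alpha t\}}\mathrm{E}(|v_t(x)|^2)\,dx\,dt\Big]^{1/2}$.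 *)

theory Defs
  imports "HOL-Probability.Probability"
begin

definition lsc_real :: "(real \<Rightarrow> real) \<Rightarrow> bool" where
  "lsc_real h \<longleftrightarrow> (\<forall>x c. c < h x \<longrightarrow> (\<forall>\<^sub>F y in at x. c < h y))"

definition D_exp :: "(real \<Rightarrow> real) set" where
  "D_exp = {h. bounded (range h) \<and> lsc_real h \<and> (\<forall>x. 0 \<le> h x) \<and>
      (\<exists>\<rho>>0. \<exists>C R. \<forall>x. R \<le> \<bar>x\<bar> \<longrightarrow> h x \<le> C * exp (- \<rho> * \<bar>x\<bar>))}"

definition brownian_sheet ::
  "'a measure \<Rightarrow> (real \<Rightarrow> 'a measure) \<Rightarrow> (real \<Rightarrow> real \<Rightarrow> 'a \<Rightarrow> real) \<Rightarrow> bool" where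
  "brownian_sheet M F W \<longleftrightarrow> prob_space M \<and> filtration (space M) F \<and> (\<forall>t. sets (F t) \<subseteq> sets M) \<and>
     (\<forall>t x. 0 \<le> t \<longrightarrow> W t x \<in> borel_measurable (F t)) \<and>
     (\<forall>x. \<forall>\<omega>\<in>space M. W 0 x \<omega> = 0) \<and>
     (\<forall>t. 0 \<le> t \<longrightarrow> (\<forall>\<omega>\<in>space M. W t 0 \<omega> = 0)) \<and>
     (\<forall>s t n (xs :: nat \<Rightarrow> real). 0 \<le> s \<and> s < t \<and> (\<forall>i<n. xs i < xs (Suc i)) \<longrightarrow>
        (let D = (\<lambda>i \<omega>. (W t (xs (Suc i)) \<omega> - W t (xs i) \<omega>) - (W s (xs (Suc i)) \<omega> - W s (xs i) \<omega>)) in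
          (\<forall>i<n. distributed M lborel (D i)
                   (\<lambda>z. ennreal (normal_density 0 (sqrt ((t - s) * (xs (Suc i) - xs i))) z))) \<and>
          prob_space.indep_sets M
            (\<lambda>j. case j of None \<Rightarrow> sets (F s) | Some i \<Rightarrow> sets (vimage_algebra (space M) (D i) borel))
            (insert None (Some ` {..<n}))))"

definition rect_incr :: "(real \<Rightarrow> real \<Rightarrow> 'a \<Rightarrow> real) \<Rightarrow> real \<Rightarrow> real \<Rightarrow> real \<Rightarrow> real \<Rightarrow> 'a \<Rightarrow> real" where
  "rect_incr W a b c d \<omega> = W b d \<omega> - W b c \<omega> - W a d \<omega> + W a c \<omega>"

text \<open>Simple predictable integrands: finite sums of xi(omega) 1_(a,b](s) 1_(c,d](y), xi bounded F_a-measurable.\<close>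

type_synonym 'a simple_field = "(real \<times> real \<times> real \<times> real \<times> ('a \<Rightarrow> real)) list"

definition simple_valid :: "'a measure \<Rightarrow> (real \<Rightarrow> 'a measure) \<Rightarrow> 'a simple_field \<Rightarrow> bool" where
  "simple_valid M F L \<longleftrightarrow> (\<forall>(a, b, c, d, \<xi>) \<in> set L. 0 \<le> a \<and> a < b \<and> c < d \<and>
      \<xi> \<in> borel_measurable (F a) \<and> (\<exists>B. \<forall>\<omega>\<in>space M. \<bar>\<xi> \<omega>\<bar> \<le> B))"

definition simple_eval :: "'a simple_field \<Rightarrow> real \<Rightarrow> real \<Rightarrow> 'a \<Rightarrow> real" where
  "simple_eval L s y \<omega> = (\<Sum>(a, b, c, d, \<xi>) \<leftarrow> L. \<xi> \<omega> * indicator {a<..b} s * indicator {c<..d} y)"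

definition simple_int :: "(real \<Rightarrow> real \<Rightarrow> 'a \<Rightarrow> real) \<Rightarrow> 'a simple_field \<Rightarrow> 'a \<Rightarrow> real" where
  "simple_int W L \<omega> = (\<Sum>(a, b, c, d, \<xi>) \<leftarrow> L. \<xi> \<omega> * rect_incr W a b c d \<omega>)"

definition field_dist2 :: "'a measure \<Rightarrow> (real \<Rightarrow> real \<Rightarrow> 'a \<Rightarrow> real) \<Rightarrow> (real \<Rightarrow> real \<Rightarrow> 'a \<Rightarrow> real) \<Rightarrow> ennreal" where
  "field_dist2 M f g = (\<integral>\<^sup>+ \<omega>. (\<integral>\<^sup>+ z. ennreal ((f (fst z) (snd z) \<omega> - g (fst z) (snd z) \<omega>)\<^sup>2)
                           \<partial>(lborel \<Otimes>\<^sub>M lborel)) \<partial>M)"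

definition has_walsh_integral ::
  "'a measure \<Rightarrow> (real \<Rightarrow> 'a measure) \<Rightarrow> (real \<Rightarrow> real \<Rightarrow> 'a \<Rightarrow> real) \<Rightarrow>
   (real \<Rightarrow> real \<Rightarrow> 'a \<Rightarrow> real) \<Rightarrow> ('a \<Rightarrow> real) \<Rightarrow> bool" where
  "has_walsh_integral M F W f I \<longleftrightarrow> I \<in> borel_measurable M \<and>
     (\<exists>Ls :: nat \<Rightarrow> 'a simple_field. (\<forall>n. simple_valid M F (Ls n)) \<and>
        (\<lambda>n. field_dist2 M f (simple_eval (Ls n))) \<longlonglongrightarrow> 0 \<and>
        (\<lambda>n. \<integral>\<^sup>+ \<omega>. ennreal ((I \<omega> - simple_int W (Ls n) \<omega>)\<^sup>2) \<partial>M) \<longlonglongrightarrow> 0)"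

definition predictable_sigma :: "'a measure \<Rightarrow> (real \<Rightarrow> 'a measure) \<Rightarrow> (real \<times> real \<times> 'a) measure" where
  "predictable_sigma M F = sigma ({0..} \<times> UNIV \<times> space M)
     ({{a<..b} \<times> A \<times> G | a b A G. 0 \<le> a \<and> a \<le> b \<and> A \<in> sets borel \<and> G \<in> sets (F a)} \<union>
      {{0} \<times> A \<times> G | A G. A \<in> sets borel \<and> G \<in> sets (F 0)})"

definition predictable_field :: "'a measure \<Rightarrow> (real \<Rightarrow> 'a measure) \<Rightarrow> (real \<Rightarrow> real \<Rightarrow> 'a \<Rightarrow> real) \<Rightarrow> bool" where
  "predictable_field M F u \<longleftrightarrow> (\<lambda>(t, x, \<omega>). u t x \<omega>) \<in> borel_measurable (predictable_sigma M F)"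

definition wave_Gamma :: "real \<Rightarrow> real \<Rightarrow> real \<Rightarrow> real" where
  "wave_Gamma \<kappa> t x = 1/2 * indicator {- \<kappa> * t .. \<kappa> * t} x"

definition mild_solution ::
  "'a measure \<Rightarrow> (real \<Rightarrow> 'a measure) \<Rightarrow> (real \<Rightarrow> real \<Rightarrow> 'a \<Rightarrow> real) \<Rightarrow> real \<Rightarrow> (real \<Rightarrow> real) \<Rightarrow>
   (real \<Rightarrow> real) \<Rightarrow> (real \<Rightarrow> real) \<Rightarrow> (real \<Rightarrow> real \<Rightarrow> 'a \<Rightarrow> real) \<Rightarrow> bool" where
  "mild_solution M F W \<kappa> \<sigma> u0 v0 u \<longleftrightarrow> predictable_field M F u \<and>
     (\<forall>T\<ge>0. \<exists>C::real. \<forall>t\<in>{0..T}. \<forall>x. (\<integral>\<^sup>+ \<omega>. ennreal ((u t x \<omega>)\<^sup>2) \<partial>M) \<le> ennreal C) \<and>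
     (\<forall>t\<ge>0. \<forall>x. \<exists>J. has_walsh_integral M F W
          (\<lambda>s y \<omega>. indicator {0..t} s * wave_Gamma \<kappa> (t - s) (y - x) * \<sigma> (u s y \<omega>)) J \<and>
        (AE \<omega> in M. u t x \<omega> = (u0 (x + \<kappa> * t) + u0 (x - \<kappa> * t)) / 2
            + 1 / (2 * \<kappa>) * (LINT y:{x - \<kappa> * t .. x + \<kappa> * t}|lborel. v0 y) + J \<omega>))"

definition M_ab :: "'a measure \<Rightarrow> real \<Rightarrow> real \<Rightarrow> (real \<Rightarrow> real \<Rightarrow> 'a \<Rightarrow> real) \<Rightarrow> ennreal" where
  "M_ab M \<alpha> \<beta> v = (let I = (\<integral>\<^sup>+ t \<in> {0..}. ennreal (exp (- \<beta> * t)) *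
        (\<integral>\<^sup>+ x \<in> {x. \<alpha> * t \<le> \<bar>x\<bar>}. (\<integral>\<^sup>+ \<omega>. ennreal ((v t x \<omega>)\<^sup>2) \<partial>M) \<partial>lborel) \<partial>lborel)
     in if I = \<infinity> then \<infinity> else ennreal (sqrt (enn2real I)))"

definition L_sigma :: "(real \<Rightarrow> real) \<Rightarrow> real" where
  "L_sigma \<sigma> = (INF x\<in>-{0}. \<bar>\<sigma> x / x\<bar>)"

end

theory Submission
  imports Defs
begin

locale bsheet =
  fixes M :: "'a measure" and F :: "real \<Rightarrow> 'a measure" and W :: "real \<Rightarrow> real \<Rightarrow> 'a \<Rightarrow> real"
  assumes bs: "brownian_sheet M F W"
begin

lemma ps: "prob_space M" using bs by (simp add: brownian_sheet_def)

sublocale prob_space M by (rule ps)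

lemma filt: "filtration (space M) F" using bs by (simp add: brownian_sheet_def)

lemma space_F[simp]: "space (F t) = space M"
  using filtration.space_F[OF filt] .

lemma sets_F_mono: "s \<le> t \<Longrightarrow> sets (F s) \<subseteq> sets (F t)"
  using filtration.sets_F_mono[OF filt] by blast

lemma sets_F_M: "sets (F t) \<subseteq> sets M" using bs by (simp add: brownian_sheet_def)

lemma meas_F_M: "f \<in> borel_measurable (F t) \<Longrightarrow> f \<in> borel_measurable M"
  by (rule measurable_from_subalg[of _ "F t"]) (auto simp: subalgebra_def sets_F_M)

lemma meas_F_mono: "s \<le> t \<Longrightarrow> f \<in> borel_measurable (F s) \<Longrightarrow> f \<in> borel_measurable (F t)"
  by (rule measurable_from_subalg[of _ "F s"]) (auto simp: subalgebra_def sets_F_mono)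

lemma W_meas: "0 \<le> t \<Longrightarrow> W t x \<in> borel_measurable (F t)"
  using bs by (simp add: brownian_sheet_def)

abbreviation R where "R s t c d \<equiv> rect_incr W s t c d"

lemma R_meas: "0 \<le> s \<Longrightarrow> s \<le> t \<Longrightarrow> R s t c d \<in> borel_measurable (F t)"
proof -
  assume a: "0 \<le> s" "s \<le> t"
  have 1: "W t x \<in> borel_measurable (F t)" for x using W_meas a by simp
  have 2: "W s x \<in> borel_measurable (F t)" for x using meas_F_mono[OF a(2) W_meas[OF a(1)]] .
  show ?thesis unfolding rect_incr_def
    by (intro borel_measurable_add borel_measurable_diff 1 2)
qed

lemma R_measM: "0 \<le> s \<Longrightarrow> s \<le> t \<Longrightarrow> R s t c d \<in> borel_measurable M"
  using R_meas meas_F_M by blast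

lemma R_tt[simp]: "R t t c d = (\<lambda>\<omega>. 0)" by (simp add: rect_incr_def fun_eq_iff)
lemma R_cc[simp]: "R s t c c = (\<lambda>\<omega>. 0)" by (simp add: rect_incr_def fun_eq_iff)
lemma R_split_x: "R s t c d \<omega> = R s t c e \<omega> + R s t e d \<omega>" by (simp add: rect_incr_def)
lemma R_split_t: "R s t c d \<omega> = R s r c d \<omega> + R r t c d \<omega>" by (simp add: rect_incr_def)

lemma bs_main:
  assumes "0 \<le> s" "s < t" "\<forall>i<n. xs i < xs (Suc i)"
  shows "(\<forall>i<n. distributed M lborel (R s t (xs i) (xs (Suc i)))
                   (\<lambda>z. ennreal (normal_density 0 (sqrt ((t - s) * (xs (Suc i) - xs i))) z))) \<and>
          indep_sets
            (\<lambda>j. case j of None \<Rightarrow> sets (F s) | Some i \<Rightarrow> sets (vimage_algebra (space M) (R s t (xs i) (xs (Suc i))) borel))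
            (insert None (Some ` {..<n}))"
proof -
  have eq: "(\<lambda>\<omega>. (W t (xs (Suc i)) \<omega> - W t (xs i) \<omega>) - (W s (xs (Suc i)) \<omega> - W s (xs i) \<omega>)) = R s t (xs i) (xs (Suc i))" for i
    by (simp add: rect_incr_def fun_eq_iff)
  have "\<forall>s t n (xs :: nat \<Rightarrow> real). 0 \<le> s \<and> s < t \<and> (\<forall>i<n. xs i < xs (Suc i)) \<longrightarrow>
        (let D = (\<lambda>i \<omega>. (W t (xs (Suc i)) \<omega> - W t (xs i) \<omega>) - (W s (xs (Suc i)) \<omega> - W s (xs i) \<omega>)) in
          (\<forall>i<n. distributed M lborel (D i)
                   (\<lambda>z. ennreal (normal_density 0 (sqrt ((t - s) * (xs (Suc i) - xs i))) z))) \<and>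
          prob_space.indep_sets M
            (\<lambda>j. case j of None \<Rightarrow> sets (F s) | Some i \<Rightarrow> sets (vimage_algebra (space M) (D i) borel))
            (insert None (Some ` {..<n})))"
    using bs unfolding brownian_sheet_def by (elim conjE) assumption
  then have "(let D = (\<lambda>i \<omega>. (W t (xs (Suc i)) \<omega> - W t (xs i) \<omega>) - (W s (xs (Suc i)) \<omega> - W s (xs i) \<omega>)) in
          (\<forall>i<n. distributed M lborel (D i)
                   (\<lambda>z. ennreal (normal_density 0 (sqrt ((t - s) * (xs (Suc i) - xs i))) z))) \<and>
          prob_space.indep_sets M
            (\<lambda>j. case j of None \<Rightarrow> sets (F s) | Some i \<Rightarrow> sets (vimage_algebra (space M) (D i) borel))
            (insert None (Some ` {..<n})))"
    using assms by blast
  then show ?thesis unfolding Let_def eq .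
qed

lemma indep_core:
  assumes "0 \<le> s" "s < t" "\<forall>i<n. xs i < xs (Suc i)" "Z \<in> borel_measurable (F s)"
    and g: "\<And>i. g i \<in> borel_measurable borel"
  shows "indep_vars (\<lambda>_. borel) (\<lambda>k. case k of None \<Rightarrow> Z | Some i \<Rightarrow> (\<lambda>\<omega>. g i (R s t (xs i) (xs (Suc i)) \<omega>)))
            (insert None (Some ` {..<n}))"
  unfolding indep_vars_def2
proof (intro conjI ballI)
  have Rm: "R s t (xs i) (xs (Suc i)) \<in> borel_measurable M" for i
    using R_measM assms by simp
  fix k assume "k \<in> insert None (Some ` {..<n})"
  show "random_variable borel (case k of None \<Rightarrow> Z | Some i \<Rightarrow> (\<lambda>\<omega>. g i (R s t (xs i) (xs (Suc i)) \<omega>)))"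
  proof (cases k)
    case None
    then show ?thesis using meas_F_M[OF assms(4)] by simp
  next
    case (Some i)
    have "(\<lambda>\<omega>. g i (R s t (xs i) (xs (Suc i)) \<omega>)) \<in> borel_measurable M"
      using measurable_compose[OF Rm g] by (simp add: comp_def)
    then show ?thesis using Some by simp
  qed
next
  show "indep_sets (\<lambda>k. {(case k of None \<Rightarrow> Z | Some i \<Rightarrow> (\<lambda>\<omega>. g i (R s t (xs i) (xs (Suc i)) \<omega>))) -` A \<inter> space M |A. A \<in> sets borel})
     (insert None (Some ` {..<n}))"
  proof (rule indep_sets_mono_sets[OF conjunct2[OF bs_main[OF assms(1-3)]]])
    fix k assume "k \<in> insert None (Some ` {..<n})"
    show "{(case k of None \<Rightarrow> Z | Some i \<Rightarrow> (\<lambda>\<omega>. g i (R s t (xs i) (xs (Suc i)) \<omega>))) -` A \<inter> space M |A. A \<in> sets borel}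
          \<subseteq> (case k of None \<Rightarrow> sets (F s) | Some i \<Rightarrow> sets (vimage_algebra (space M) (R s t (xs i) (xs (Suc i))) borel))"
    proof (cases k)
      case None
      then show ?thesis using assms(4) by (auto simp: measurable_def)
    next
      case (Some i)
      have "(\<lambda>\<omega>. g i (R s t (xs i) (xs (Suc i)) \<omega>)) -` A \<inter> space M \<in> sets (vimage_algebra (space M) (R s t (xs i) (xs (Suc i))) borel)"
        if "A \<in> sets borel" for A
      proof -
        have "g i -` A \<in> sets borel" using g[of i] that by (auto simp: measurable_def)
        then have "R s t (xs i) (xs (Suc i)) -` (g i -` A) \<inter> space M \<in> sets (vimage_algebra (space M) (R s t (xs i) (xs (Suc i))) borel)"
          by (intro in_vimage_algebra) auto
        then show ?thesis by (simp add: vimage_def)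
      qed
      then show ?thesis using Some by auto
    qed
  qed
qed

end

context bsheet begin

lemma R_dist:
  assumes "0 \<le> s" "s < t" "c < d"
  shows "distributed M lborel (R s t c d) (\<lambda>z. ennreal (normal_density 0 (sqrt ((t - s) * (d - c))) z))"
  using conjunct1[OF bs_main[OF assms(1,2), of 1 "\<lambda>i. if i = 0 then c else d"]] assms(3) by simp

lemma R_mom1:
  assumes "0 \<le> s" "s \<le> t" "c \<le> d"
  shows "integrable M (R s t c d)" "expectation (R s t c d) = 0"
proof -
  have "integrable M (R s t c d) \<and> expectation (R s t c d) = 0"
  proof (cases "s < t \<and> c < d")
    case True
    then have D: "distributed M lborel (R s t c d) (\<lambda>z. ennreal (normal_density 0 (sqrt ((t - s) * (d - c))) z))"
      using R_dist assms by auto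
    have sp: "0 < sqrt ((t - s) * (d - c))" using True by simp
    have "integrable M (R s t c d)"
      by (rule distributed_integrable_var[OF D]) (auto intro: integrable_normal_moment_nz_1[OF sp])
    moreover have "expectation (R s t c d) = 0"
      using normal_distributed_expectation[OF sp D] .
    ultimately show ?thesis by simp
  next
    case False
    then have "s = t \<or> c = d" using assms by auto
    then show ?thesis by auto
  qed
  then show "integrable M (R s t c d)" "expectation (R s t c d) = 0" by auto
qed

lemma R_mom2:
  assumes "0 \<le> s" "s \<le> t" "c \<le> d"
  shows "integrable M (\<lambda>\<omega>. (R s t c d \<omega>)\<^sup>2)" "expectation (\<lambda>\<omega>. (R s t c d \<omega>)\<^sup>2) = (t - s) * (d - c)"
proof -
  have "integrable M (\<lambda>\<omega>. (R s t c d \<omega>)\<^sup>2) \<and> expectation (\<lambda>\<omega>. (R s t c d \<omega>)\<^sup>2) = (t - s) * (d - c)"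
  proof (cases "s < t \<and> c < d")
    case True
    define \<sigma> where "\<sigma> = sqrt ((t - s) * (d - c))"
    have D: "distributed M lborel (R s t c d) (\<lambda>z. ennreal (normal_density 0 \<sigma> z))"
      using R_dist assms True by (auto simp: \<sigma>_def)
    have sp: "0 < \<sigma>" using True by (simp add: \<sigma>_def)
    have i2: "integrable M (\<lambda>\<omega>. (R s t c d \<omega>)\<^sup>2)"
      using distributed_integrable[OF D, of "\<lambda>x. x\<^sup>2"] integrable_normal_moment[OF sp, of 0 2]
      by simp
    have e1: "expectation (R s t c d) = 0" using normal_distributed_expectation[OF sp D] .
    have "variance (R s t c d) = \<sigma>\<^sup>2" using normal_distributed_variance[OF sp D] .
    then have "expectation (\<lambda>\<omega>. (R s t c d \<omega>)\<^sup>2) = \<sigma>\<^sup>2" using e1 by simp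
    also have "\<sigma>\<^sup>2 = (t - s) * (d - c)" using True by (simp add: \<sigma>_def)
    finally show ?thesis using i2 by simp
  next
    case False
    then have "s = t \<or> c = d" using assms by auto
    then show ?thesis by auto
  qed
  then show "integrable M (\<lambda>\<omega>. (R s t c d \<omega>)\<^sup>2)" "expectation (\<lambda>\<omega>. (R s t c d \<omega>)\<^sup>2) = (t - s) * (d - c)" by auto
qed

lemma E1:
  assumes "0 \<le> s" "s \<le> t" "c \<le> d" "Z \<in> borel_measurable (F s)" "integrable M Z"
  shows "integrable M (\<lambda>\<omega>. Z \<omega> * R s t c d \<omega>)" "expectation (\<lambda>\<omega>. Z \<omega> * R s t c d \<omega>) = 0"
proof -
  have "integrable M (\<lambda>\<omega>. Z \<omega> * R s t c d \<omega>) \<and> expectation (\<lambda>\<omega>. Z \<omega> * R s t c d \<omega>) = 0"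
  proof (cases "s < t \<and> c < d")
    case True
    define xs where "xs = (\<lambda>i::nat. if i = 0 then c else d)"
    have iv: "indep_vars (\<lambda>_. borel) (\<lambda>k. case k of None \<Rightarrow> Z | Some i \<Rightarrow> (\<lambda>\<omega>. (\<lambda>_ x. x) i (R s t (xs i) (xs (Suc i)) \<omega>)))
            (insert None (Some ` {..<1}))"
      by (rule indep_core) (use True assms in \<open>auto simp: xs_def\<close>)
    have I: "insert None (Some ` {..<1::nat}) = {None, Some 0}" by auto
    have ints: "integrable M ((\<lambda>k. case k of None \<Rightarrow> Z | Some i \<Rightarrow> (\<lambda>\<omega>. (\<lambda>_ x. x) i (R s t (xs i) (xs (Suc i)) \<omega>))) k)"
      if "k \<in> {None, Some 0}" for k
      using that assms R_mom1[OF assms(1-3)] by (auto simp: xs_def)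
    note L = indep_vars_lebesgue_integral[OF _ iv[unfolded I] ints] indep_vars_integrable[OF _ iv[unfolded I] ints]
    show ?thesis using L R_mom1[OF assms(1-3)] by (simp add: xs_def)
  next
    case False
    then have "s = t \<or> c = d" using assms by auto
    then show ?thesis by auto
  qed
  then show "integrable M (\<lambda>\<omega>. Z \<omega> * R s t c d \<omega>)" "expectation (\<lambda>\<omega>. Z \<omega> * R s t c d \<omega>) = 0" by auto
qed

end

context bsheet begin

lemma B1:
  assumes "0 \<le> s" "s \<le> t" "c \<le> d" "Z \<in> borel_measurable (F s)" "integrable M Z"
  shows "integrable M (\<lambda>\<omega>. Z \<omega> * (R s t c d \<omega>)\<^sup>2)"
    "expectation (\<lambda>\<omega>. Z \<omega> * (R s t c d \<omega>)\<^sup>2) = expectation Z * ((t - s) * (d - c))"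
proof -
  have "integrable M (\<lambda>\<omega>. Z \<omega> * (R s t c d \<omega>)\<^sup>2) \<and> expectation (\<lambda>\<omega>. Z \<omega> * (R s t c d \<omega>)\<^sup>2) = expectation Z * ((t - s) * (d - c))"
  proof (cases "s < t \<and> c < d")
    case True
    define xs where "xs = (\<lambda>i::nat. if i = 0 then c else d)"
    have iv: "indep_vars (\<lambda>_. borel) (\<lambda>k. case k of None \<Rightarrow> Z | Some i \<Rightarrow> (\<lambda>\<omega>. (\<lambda>_ x. x\<^sup>2) i (R s t (xs i) (xs (Suc i)) \<omega>)))
            (insert None (Some ` {..<1}))"
      by (rule indep_core) (use True assms in \<open>auto simp: xs_def\<close>)
    have I: "insert None (Some ` {..<1::nat}) = {None, Some 0}" by auto
    have ints: "integrable M ((\<lambda>k. case k of None \<Rightarrow> Z | Some i \<Rightarrow> (\<lambda>\<omega>. (\<lambda>_ x. x\<^sup>2) i (R s t (xs i) (xs (Suc i)) \<omega>))) k)"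
      if "k \<in> {None, Some 0}" for k
      using that assms R_mom2[OF assms(1-3)] by (auto simp: xs_def)
    note L = indep_vars_lebesgue_integral[OF _ iv[unfolded I] ints] indep_vars_integrable[OF _ iv[unfolded I] ints]
    show ?thesis using L R_mom2[OF assms(1-3)] by (simp add: xs_def)
  next
    case False
    then have "s = t \<or> c = d" using assms by auto
    then show ?thesis by auto
  qed
  then show "integrable M (\<lambda>\<omega>. Z \<omega> * (R s t c d \<omega>)\<^sup>2)"
    "expectation (\<lambda>\<omega>. Z \<omega> * (R s t c d \<omega>)\<^sup>2) = expectation Z * ((t - s) * (d - c))" by auto
qed

lemma E_ij:
  assumes "0 \<le> s" "s < t" "\<forall>i<n. xs i < xs (Suc i)" "Z \<in> borel_measurable (F s)" "integrable M Z"
    "i < n" "j < n" "i \<noteq> j"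
  shows "integrable M (\<lambda>\<omega>. Z \<omega> * R s t (xs i) (xs (Suc i)) \<omega> * R s t (xs j) (xs (Suc j)) \<omega>)"
    "expectation (\<lambda>\<omega>. Z \<omega> * R s t (xs i) (xs (Suc i)) \<omega> * R s t (xs j) (xs (Suc j)) \<omega>) = 0"
proof -
  have iv0: "indep_vars (\<lambda>_. borel) (\<lambda>k. case k of None \<Rightarrow> Z | Some i \<Rightarrow> (\<lambda>\<omega>. (\<lambda>_ x. x) i (R s t (xs i) (xs (Suc i)) \<omega>)))
            (insert None (Some ` {..<n}))"
    by (rule indep_core) (use assms in auto)
  have iv: "indep_vars (\<lambda>_. borel) (\<lambda>k. case k of None \<Rightarrow> Z | Some i \<Rightarrow> (\<lambda>\<omega>. (\<lambda>_ x. x) i (R s t (xs i) (xs (Suc i)) \<omega>)))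
            {None, Some i, Some j}"
    by (rule indep_vars_subset[OF iv0]) (use assms in auto)
  have ints: "integrable M ((\<lambda>k. case k of None \<Rightarrow> Z | Some i \<Rightarrow> (\<lambda>\<omega>. (\<lambda>_ x. x) i (R s t (xs i) (xs (Suc i)) \<omega>))) k)"
    if "k \<in> {None, Some i, Some j}" for k
    using that assms R_mom1[OF assms(1), of t "xs i" "xs (Suc i)"] R_mom1[OF assms(1), of t "xs j" "xs (Suc j)"]
    by (auto simp: less_imp_le)
  note L = indep_vars_lebesgue_integral[OF _ iv ints] indep_vars_integrable[OF _ iv ints]
  have m1: "expectation (R s t (xs i) (xs (Suc i))) = 0"
    using R_mom1[OF assms(1), of t "xs i" "xs (Suc i)"] assms by (auto simp: less_imp_le)
  show "integrable M (\<lambda>\<omega>. Z \<omega> * R s t (xs i) (xs (Suc i)) \<omega> * R s t (xs j) (xs (Suc j)) \<omega>)"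
    using L(2) assms(8) by (simp add: mult.assoc)
  show "expectation (\<lambda>\<omega>. Z \<omega> * R s t (xs i) (xs (Suc i)) \<omega> * R s t (xs j) (xs (Suc j)) \<omega>) = 0"
    using L(1) assms(8) m1 by (simp add: mult.assoc)
qed

lemma B2:
  assumes "0 \<le> s" "s \<le> t" "c \<le> d" "d \<le> c'" "c' \<le> d'" "Z \<in> borel_measurable (F s)" "integrable M Z"
  shows "integrable M (\<lambda>\<omega>. Z \<omega> * R s t c d \<omega> * R s t c' d' \<omega>)"
    "expectation (\<lambda>\<omega>. Z \<omega> * R s t c d \<omega> * R s t c' d' \<omega>) = 0"
proof -
  have "integrable M (\<lambda>\<omega>. Z \<omega> * R s t c d \<omega> * R s t c' d' \<omega>) \<and> expectation (\<lambda>\<omega>. Z \<omega> * R s t c d \<omega> * R s t c' d' \<omega>) = 0"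
  proof (cases "s < t \<and> c < d \<and> c' < d'")
    case True
    show ?thesis
    proof (cases "d = c'")
      case True2: True
      define xs where "xs = (\<lambda>i::nat. if i = 0 then c else if i = 1 then d else d')"
      have mono: "\<forall>i<2. xs i < xs (Suc i)" using True True2 by (auto simp: xs_def less_2_cases_iff)
      have st: "s < t" using True by simp
      from E_ij[OF assms(1) st mono assms(6,7), where i=0 and j=1] True True2 show ?thesis by (simp add: xs_def)
    next
      case False
      define xs where "xs = (\<lambda>i::nat. if i = 0 then c else if i = 1 then d else if i = 2 then c' else d')"
      have mono: "\<forall>i<3. xs i < xs (Suc i)" using True False assms by (auto simp: xs_def less_Suc_eq)
      have st: "s < t" using True by simp
      from E_ij[OF assms(1) st mono assms(6,7), where i=0 and j=2] True show ?thesis by (simp add: xs_def)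
    qed
  next
    case False
    then have "s = t \<or> c = d \<or> c' = d'" using assms by auto
    then show ?thesis by auto
  qed
  then show "integrable M (\<lambda>\<omega>. Z \<omega> * R s t c d \<omega> * R s t c' d' \<omega>)"
    "expectation (\<lambda>\<omega>. Z \<omega> * R s t c d \<omega> * R s t c' d' \<omega>) = 0" by auto
qed

end

definition ovl :: "real \<Rightarrow> real \<Rightarrow> real \<Rightarrow> real \<Rightarrow> real" where
  "ovl c d c' d' = max 0 (min d d' - max c c')"

context bsheet begin

lemma K2_aux:
  assumes "0 \<le> s" "s \<le> t" "c \<le> d" "c' \<le> d'" "c \<le> c'" "Z \<in> borel_measurable (F s)" "integrable M Z"
  shows "integrable M (\<lambda>\<omega>. Z \<omega> * R s t c d \<omega> * R s t c' d' \<omega>) \<and>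
    expectation (\<lambda>\<omega>. Z \<omega> * R s t c d \<omega> * R s t c' d' \<omega>) = expectation Z * ((t - s) * ovl c d c' d')"
proof (cases "d \<le> c'")
  case True
  then have "ovl c d c' d' = 0" by (simp add: ovl_def)
  then show ?thesis using B2[OF assms(1-3) True assms(4,6,7)] by simp
next
  case False
  note b1 = B1[OF assms(1,2) _ assms(6,7)]
  note b2 = B2[OF assms(1,2) _ _ _ assms(6,7)]
  show ?thesis
  proof (cases "d \<le> d'")
    case True
    have eq: "(\<lambda>\<omega>. Z \<omega> * R s t c d \<omega> * R s t c' d' \<omega>) = (\<lambda>\<omega>.
      (Z \<omega> * R s t c c' \<omega> * R s t c' d \<omega> + Z \<omega> * R s t c c' \<omega> * R s t d d' \<omega>) +
      (Z \<omega> * (R s t c' d \<omega>)\<^sup>2 + Z \<omega> * R s t c' d \<omega> * R s t d d' \<omega>))"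
      by (simp add: fun_eq_iff rect_incr_def power2_eq_square algebra_simps)
    have i1: "integrable M (\<lambda>\<omega>. Z \<omega> * R s t c c' \<omega> * R s t c' d \<omega>)"
      "expectation (\<lambda>\<omega>. Z \<omega> * R s t c c' \<omega> * R s t c' d \<omega>) = 0"
      using b2[of c c' c' d] assms False by auto
    have i2: "integrable M (\<lambda>\<omega>. Z \<omega> * R s t c c' \<omega> * R s t d d' \<omega>)"
      "expectation (\<lambda>\<omega>. Z \<omega> * R s t c c' \<omega> * R s t d d' \<omega>) = 0"
      using b2[of c c' d d'] assms False True by auto
    have i3: "integrable M (\<lambda>\<omega>. Z \<omega> * (R s t c' d \<omega>)\<^sup>2)"
      "expectation (\<lambda>\<omega>. Z \<omega> * (R s t c' d \<omega>)\<^sup>2) = expectation Z * ((t - s) * (d - c'))"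
      using b1[of c' d] False by auto
    have i4: "integrable M (\<lambda>\<omega>. Z \<omega> * R s t c' d \<omega> * R s t d d' \<omega>)"
      "expectation (\<lambda>\<omega>. Z \<omega> * R s t c' d \<omega> * R s t d d' \<omega>) = 0"
      using b2[of c' d d d'] False True by auto
    have ov: "ovl c d c' d' = d - c'" using True False assms by (simp add: ovl_def)
    show ?thesis unfolding eq ov using i1 i2 i3 i4 by simp
  next
    case False2: False
    have eq: "(\<lambda>\<omega>. Z \<omega> * R s t c d \<omega> * R s t c' d' \<omega>) = (\<lambda>\<omega>.
      (Z \<omega> * R s t c c' \<omega> * R s t c' d' \<omega> + Z \<omega> * (R s t c' d' \<omega>)\<^sup>2) +
      Z \<omega> * R s t c' d' \<omega> * R s t d' d \<omega>)"
      by (simp add: fun_eq_iff rect_incr_def power2_eq_square algebra_simps)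
    have i1: "integrable M (\<lambda>\<omega>. Z \<omega> * R s t c c' \<omega> * R s t c' d' \<omega>)"
      "expectation (\<lambda>\<omega>. Z \<omega> * R s t c c' \<omega> * R s t c' d' \<omega>) = 0"
      using b2[of c c' c' d'] assms by auto
    have i3: "integrable M (\<lambda>\<omega>. Z \<omega> * (R s t c' d' \<omega>)\<^sup>2)"
      "expectation (\<lambda>\<omega>. Z \<omega> * (R s t c' d' \<omega>)\<^sup>2) = expectation Z * ((t - s) * (d' - c'))"
      using b1[of c' d'] assms by auto
    have i4: "integrable M (\<lambda>\<omega>. Z \<omega> * R s t c' d' \<omega> * R s t d' d \<omega>)"
      "expectation (\<lambda>\<omega>. Z \<omega> * R s t c' d' \<omega> * R s t d' d \<omega>) = 0"
      using b2[of c' d' d' d] assms False2 by auto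
    have ov: "ovl c d c' d' = d' - c'" using False2 False assms by (simp add: ovl_def)
    show ?thesis unfolding eq ov using i1 i3 i4 by simp
  qed
qed

lemma K2:
  assumes "0 \<le> s" "s \<le> t" "c \<le> d" "c' \<le> d'" "Z \<in> borel_measurable (F s)" "integrable M Z"
  shows "integrable M (\<lambda>\<omega>. Z \<omega> * R s t c d \<omega> * R s t c' d' \<omega>)"
    "expectation (\<lambda>\<omega>. Z \<omega> * R s t c d \<omega> * R s t c' d' \<omega>) = expectation Z * ((t - s) * ovl c d c' d')"
proof -
  have "integrable M (\<lambda>\<omega>. Z \<omega> * R s t c d \<omega> * R s t c' d' \<omega>) \<and>
    expectation (\<lambda>\<omega>. Z \<omega> * R s t c d \<omega> * R s t c' d' \<omega>) = expectation Z * ((t - s) * ovl c d c' d')"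
  proof (cases "c \<le> c'")
    case True
    then show ?thesis using K2_aux assms by blast
  next
    case False
    have "integrable M (\<lambda>\<omega>. Z \<omega> * R s t c' d' \<omega> * R s t c d \<omega>) \<and>
      expectation (\<lambda>\<omega>. Z \<omega> * R s t c' d' \<omega> * R s t c d \<omega>) = expectation Z * ((t - s) * ovl c' d' c d)"
      using K2_aux[OF assms(1,2,4,3) _ assms(5,6)] False by simp
    moreover have "ovl c' d' c d = ovl c d c' d'" by (simp add: ovl_def min.commute max.commute)
    moreover have "(\<lambda>\<omega>. Z \<omega> * R s t c' d' \<omega> * R s t c d \<omega>) = (\<lambda>\<omega>. Z \<omega> * R s t c d \<omega> * R s t c' d' \<omega>)"
      by (simp add: fun_eq_iff mult_ac)
    ultimately show ?thesis by simp
  qed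
  then show "integrable M (\<lambda>\<omega>. Z \<omega> * R s t c d \<omega> * R s t c' d' \<omega>)"
    "expectation (\<lambda>\<omega>. Z \<omega> * R s t c d \<omega> * R s t c' d' \<omega>) = expectation Z * ((t - s) * ovl c d c' d')" by auto
qed

end

context bsheet begin

lemma int_bdd:
  fixes X Y :: "'a \<Rightarrow> real"
  assumes "integrable M Y" "X \<in> borel_measurable M" "\<forall>\<omega>\<in>space M. \<bar>X \<omega>\<bar> \<le> B"
  shows "integrable M (\<lambda>\<omega>. X \<omega> * Y \<omega>)"
proof (rule Bochner_Integration.integrable_bound[where f="\<lambda>\<omega>. B * Y \<omega>"])
  show "integrable M (\<lambda>\<omega>. B * Y \<omega>)" using assms(1) by simp
  show "(\<lambda>\<omega>. X \<omega> * Y \<omega>) \<in> borel_measurable M"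
    using assms(1,2) by (intro borel_measurable_times) auto
  show "AE \<omega> in M. norm (X \<omega> * Y \<omega>) \<le> norm (B * Y \<omega>)"
  proof (rule AE_I2)
    fix \<omega> assume "\<omega> \<in> space M"
    then have "\<bar>X \<omega>\<bar> \<le> B" using assms(3) by auto
    then have "\<bar>X \<omega>\<bar> * \<bar>Y \<omega>\<bar> \<le> \<bar>B\<bar> * \<bar>Y \<omega>\<bar>" by (intro mult_right_mono) auto
    then show "norm (X \<omega> * Y \<omega>) \<le> norm (B * Y \<omega>)" by (simp add: abs_mult)
  qed
qed

lemma int_bdd_const:
  fixes X :: "'a \<Rightarrow> real"
  assumes "X \<in> borel_measurable M" "\<forall>\<omega>\<in>space M. \<bar>X \<omega>\<bar> \<le> B"
  shows "integrable M X"
  using int_bdd[of "\<lambda>_. 1" X B] assms by simp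

lemma pair_aux:
  assumes "0 \<le> a" "a \<le> b" "c \<le> d" "0 \<le> a'" "a' \<le> b'" "c' \<le> d'" "a \<le> a'"
    and \<xi>: "\<xi> \<in> borel_measurable (F a)" "\<forall>\<omega>\<in>space M. \<bar>\<xi> \<omega>\<bar> \<le> B"
    and \<xi>': "\<xi>' \<in> borel_measurable (F a')" "\<forall>\<omega>\<in>space M. \<bar>\<xi>' \<omega>\<bar> \<le> B'"
  shows "integrable M (\<lambda>\<omega>. \<xi> \<omega> * \<xi>' \<omega> * R a b c d \<omega> * R a' b' c' d' \<omega>) \<and>
    expectation (\<lambda>\<omega>. \<xi> \<omega> * \<xi>' \<omega> * R a b c d \<omega> * R a' b' c' d' \<omega>) =
      expectation (\<lambda>\<omega>. \<xi> \<omega> * \<xi>' \<omega>) * (ovl a b a' b' * ovl c d c' d')"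
proof -
  define \<eta> where "\<eta> = (\<lambda>\<omega>. \<xi> \<omega> * \<xi>' \<omega>)"
  have \<eta>m: "\<eta> \<in> borel_measurable (F a')"
    unfolding \<eta>_def using meas_F_mono[OF assms(7) \<xi>(1)] \<xi>'(1) by (intro borel_measurable_times)
  have \<eta>b: "\<forall>\<omega>\<in>space M. \<bar>\<eta> \<omega>\<bar> \<le> B * B'"
    unfolding \<eta>_def using \<xi>(2) \<xi>'(2) by (auto simp: abs_mult intro!: mult_mono)
  have \<eta>mono: "\<eta> \<in> borel_measurable (F r)" if "a' \<le> r" for r using meas_F_mono[OF that \<eta>m] .
  have \<eta>M: "\<eta> \<in> borel_measurable M" using meas_F_M[OF \<eta>m] .
  have \<eta>i: "integrable M \<eta>" using int_bdd_const[OF \<eta>M \<eta>b] .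
  have Zm: "(\<lambda>\<omega>. \<eta> \<omega> * R p q e f \<omega>) \<in> borel_measurable (F r)" if "a' \<le> r" "0 \<le> p" "p \<le> q" "q \<le> r" for p q e f r
    using \<eta>mono[OF that(1)] meas_F_mono[OF that(4) R_meas[OF that(2,3)]] by (intro borel_measurable_times)
  have Zi: "integrable M (\<lambda>\<omega>. \<eta> \<omega> * R p q e f \<omega>)" if "0 \<le> p" "p \<le> q" "e \<le> f" for p q e f
    using int_bdd[OF R_mom1(1)[OF that] \<eta>M \<eta>b] .
  have E1': "integrable M (\<lambda>\<omega>. \<eta> \<omega> * R p q e f \<omega> * R r t e' f' \<omega>) \<and> expectation (\<lambda>\<omega>. \<eta> \<omega> * R p q e f \<omega> * R r t e' f' \<omega>) = 0"
    if "a' \<le> r" "0 \<le> p" "p \<le> q" "q \<le> r" "e \<le> f" "r \<le> t" "e' \<le> f'" for p q e f r t e' f'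
    using E1[OF _ that(6,7) Zm[OF that(1-4)] Zi[OF that(2,3,5)]] that by simp
  have E1'': "integrable M (\<lambda>\<omega>. \<eta> \<omega> * R r t e' f' \<omega> * R p q e f \<omega>) \<and> expectation (\<lambda>\<omega>. \<eta> \<omega> * R r t e' f' \<omega> * R p q e f \<omega>) = 0"
    if "a' \<le> r" "0 \<le> p" "p \<le> q" "q \<le> r" "e \<le> f" "r \<le> t" "e' \<le> f'" for p q e f r t e' f'
  proof -
    have "(\<lambda>\<omega>. \<eta> \<omega> * R r t e' f' \<omega> * R p q e f \<omega>) = (\<lambda>\<omega>. \<eta> \<omega> * R p q e f \<omega> * R r t e' f' \<omega>)"
      by (simp add: fun_eq_iff mult_ac)
    then show ?thesis using E1'[OF that] by simp
  qed
  have K2': "integrable M (\<lambda>\<omega>. \<eta> \<omega> * R p q c d \<omega> * R p q c' d' \<omega>) \<and>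
      expectation (\<lambda>\<omega>. \<eta> \<omega> * R p q c d \<omega> * R p q c' d' \<omega>) = expectation \<eta> * ((q - p) * ovl c d c' d')"
    if "a' \<le> p" "p \<le> q" for p q
    using K2[OF _ that(2) assms(3,6) \<eta>mono[OF that(1)] \<eta>i] that assms by simp
  have goal: "integrable M (\<lambda>\<omega>. \<eta> \<omega> * R a b c d \<omega> * R a' b' c' d' \<omega>) \<and>
    expectation (\<lambda>\<omega>. \<eta> \<omega> * R a b c d \<omega> * R a' b' c' d' \<omega>) =
      expectation \<eta> * (ovl a b a' b' * ovl c d c' d')"
  proof (cases "b \<le> a'")
    case True
    have "ovl a b a' b' = 0" using True by (simp add: ovl_def)
    then show ?thesis using E1'[of a' a b c d b' c' d'] True assms by simp
  next
    case False
    show ?thesis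
    proof (cases "b \<le> b'")
      case True
      have eq: "(\<lambda>\<omega>. \<eta> \<omega> * R a b c d \<omega> * R a' b' c' d' \<omega>) = (\<lambda>\<omega>.
        (\<eta> \<omega> * R a a' c d \<omega> * R a' b c' d' \<omega> + \<eta> \<omega> * R a a' c d \<omega> * R b b' c' d' \<omega>) +
        (\<eta> \<omega> * R a' b c d \<omega> * R a' b c' d' \<omega> + \<eta> \<omega> * R a' b c d \<omega> * R b b' c' d' \<omega>))"
        by (simp add: fun_eq_iff rect_incr_def algebra_simps)
      have i1: "integrable M (\<lambda>\<omega>. \<eta> \<omega> * R a a' c d \<omega> * R a' b c' d' \<omega>) \<and> expectation (\<lambda>\<omega>. \<eta> \<omega> * R a a' c d \<omega> * R a' b c' d' \<omega>) = 0"
        using E1'[of a' a a' c d b c' d'] False assms by simp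
      have i2: "integrable M (\<lambda>\<omega>. \<eta> \<omega> * R a a' c d \<omega> * R b b' c' d' \<omega>) \<and> expectation (\<lambda>\<omega>. \<eta> \<omega> * R a a' c d \<omega> * R b b' c' d' \<omega>) = 0"
        using E1'[of b a a' c d b' c' d'] False True assms by simp
      have i3: "integrable M (\<lambda>\<omega>. \<eta> \<omega> * R a' b c d \<omega> * R a' b c' d' \<omega>) \<and>
          expectation (\<lambda>\<omega>. \<eta> \<omega> * R a' b c d \<omega> * R a' b c' d' \<omega>) = expectation \<eta> * ((b - a') * ovl c d c' d')"
        using K2'[of a' b] False by simp
      have i4: "integrable M (\<lambda>\<omega>. \<eta> \<omega> * R a' b c d \<omega> * R b b' c' d' \<omega>) \<and> expectation (\<lambda>\<omega>. \<eta> \<omega> * R a' b c d \<omega> * R b b' c' d' \<omega>) = 0"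
        using E1'[of b a' b c d b' c' d'] False True assms by simp
      have ov: "ovl a b a' b' = b - a'" using True False assms by (simp add: ovl_def)
      show ?thesis unfolding eq ov using i1 i2 i3 i4 by (simp add: mult_ac)
    next
      case False2: False
      have eq: "(\<lambda>\<omega>. \<eta> \<omega> * R a b c d \<omega> * R a' b' c' d' \<omega>) = (\<lambda>\<omega>.
        (\<eta> \<omega> * R a a' c d \<omega> * R a' b' c' d' \<omega> + \<eta> \<omega> * R a' b' c d \<omega> * R a' b' c' d' \<omega>) +
        \<eta> \<omega> * R a' b' c' d' \<omega> * R b' b c d \<omega>)"
        by (simp add: fun_eq_iff rect_incr_def algebra_simps)
      have i1: "integrable M (\<lambda>\<omega>. \<eta> \<omega> * R a a' c d \<omega> * R a' b' c' d' \<omega>) \<and> expectation (\<lambda>\<omega>. \<eta> \<omega> * R a a' c d \<omega> * R a' b' c' d' \<omega>) = 0"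
        using E1'[of a' a a' c d b' c' d'] assms by simp
      have i3: "integrable M (\<lambda>\<omega>. \<eta> \<omega> * R a' b' c d \<omega> * R a' b' c' d' \<omega>) \<and>
          expectation (\<lambda>\<omega>. \<eta> \<omega> * R a' b' c d \<omega> * R a' b' c' d' \<omega>) = expectation \<eta> * ((b' - a') * ovl c d c' d')"
        using K2'[of a' b'] assms by simp
      have i4: "integrable M (\<lambda>\<omega>. \<eta> \<omega> * R a' b' c' d' \<omega> * R b' b c d \<omega>) \<and> expectation (\<lambda>\<omega>. \<eta> \<omega> * R a' b' c' d' \<omega> * R b' b c d \<omega>) = 0"
        using E1'[of b' a' b' c' d' b c d] False2 assms by simp
      have ov: "ovl a b a' b' = b' - a'" using False2 False assms by (simp add: ovl_def)
      show ?thesis unfolding eq ov using i1 i3 i4 by (simp add: mult_ac)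
    qed
  qed
  then show ?thesis unfolding \<eta>_def by (simp add: mult_ac)
qed

lemma pair_exp:
  assumes "0 \<le> a" "a \<le> b" "c \<le> d" "0 \<le> a'" "a' \<le> b'" "c' \<le> d'"
    and \<xi>: "\<xi> \<in> borel_measurable (F a)" "\<forall>\<omega>\<in>space M. \<bar>\<xi> \<omega>\<bar> \<le> B"
    and \<xi>': "\<xi>' \<in> borel_measurable (F a')" "\<forall>\<omega>\<in>space M. \<bar>\<xi>' \<omega>\<bar> \<le> B'"
  shows "integrable M (\<lambda>\<omega>. \<xi> \<omega> * \<xi>' \<omega> * R a b c d \<omega> * R a' b' c' d' \<omega>) \<and>
    expectation (\<lambda>\<omega>. \<xi> \<omega> * \<xi>' \<omega> * R a b c d \<omega> * R a' b' c' d' \<omega>) =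
      expectation (\<lambda>\<omega>. \<xi> \<omega> * \<xi>' \<omega>) * (ovl a b a' b' * ovl c d c' d')"
proof (cases "a \<le> a'")
  case True
  then show ?thesis using pair_aux[OF assms(1-6) True \<xi> \<xi>'] by simp
next
  case False
  have "integrable M (\<lambda>\<omega>. \<xi>' \<omega> * \<xi> \<omega> * R a' b' c' d' \<omega> * R a b c d \<omega>) \<and>
    expectation (\<lambda>\<omega>. \<xi>' \<omega> * \<xi> \<omega> * R a' b' c' d' \<omega> * R a b c d \<omega>) =
      expectation (\<lambda>\<omega>. \<xi>' \<omega> * \<xi> \<omega>) * (ovl a' b' a b * ovl c' d' c d)"
    using pair_aux[OF assms(4-6,1-3) _ \<xi>' \<xi>] False by simp
  moreover have "ovl a' b' a b = ovl a b a' b'" "ovl c' d' c d = ovl c d c' d'"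
    by (simp_all add: ovl_def min.commute max.commute)
  ultimately show ?thesis by (simp add: mult_ac)
qed

end

lemma emeasure_Ioc_gen: "emeasure lborel {p<..q::real} = ennreal (max 0 (q - p))"
  by (cases "p \<le> q") (auto simp: emeasure_lborel_Ioc max_def)

lemma Ioc_inter: "{a<..b::real} \<inter> {a'<..b'} = {max a a'<..min b b'}" by auto

lemma plane_box:
  fixes a b c d a' b' c' d' :: real
  defines "f \<equiv> (\<lambda>z. indicator {a<..b} (fst z) * indicator {c<..d} (snd z) *
       (indicator {a'<..b'} (fst z) * indicator {c'<..d'} (snd z)) :: real)"
  shows "integrable (lborel \<Otimes>\<^sub>M lborel) f" "integral\<^sup>L (lborel \<Otimes>\<^sub>M lborel) f = ovl a b a' b' * ovl c d c' d'"
proof -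
  define A where "A = {max a a'<..min b b'}"
  define B where "B = {max c c'<..min d d'}"
  have feq: "f = indicator (A \<times> B)"
    by (auto simp: f_def A_def B_def fun_eq_iff indicator_def)
  have AB: "A \<times> B \<in> sets (lborel \<Otimes>\<^sub>M lborel)" by (simp add: A_def B_def)
  have em: "emeasure (lborel \<Otimes>\<^sub>M lborel) (A \<times> B) = ennreal (ovl a b a' b' * ovl c d c' d')"
    by (simp add: lborel.emeasure_pair_measure_Times A_def B_def emeasure_Ioc_gen ovl_def ennreal_mult)
  show "integrable (lborel \<Otimes>\<^sub>M lborel) f" unfolding feq
    by (rule integrable_real_indicator[OF AB]) (simp add: em)
  show "integral\<^sup>L (lborel \<Otimes>\<^sub>M lborel) f = ovl a b a' b' * ovl c d c' d'"
    unfolding feq using em by (simp add: measure_def ovl_def space_pair_measure)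
qed

lemma ovl_nonneg: "0 \<le> ovl a b c d" by (simp add: ovl_def)

lemma sum_sq: "(\<Sum>k<n. f k :: real)\<^sup>2 = (\<Sum>k<n. \<Sum>l<n. f k * f l)"
  by (simp add: power2_eq_square sum_product)

context bsheet begin

lemma simple_iso:
  assumes V: "simple_valid M F L"
  shows "(\<integral>\<^sup>+\<omega>. (\<integral>\<^sup>+z. ennreal ((simple_eval L (fst z) (snd z) \<omega>)\<^sup>2) \<partial>(lborel \<Otimes>\<^sub>M lborel)) \<partial>M)
       = (\<integral>\<^sup>+\<omega>. ennreal ((simple_int W L \<omega>)\<^sup>2) \<partial>M)"
proof -
  define n where "n = length L"
  define A where "A k = fst (L!k)" for k
  define B where "B k = fst (snd (L!k))" for k
  define C where "C k = fst (snd (snd (L!k)))" for k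
  define D where "D k = fst (snd (snd (snd (L!k))))" for k
  define X where "X k = snd (snd (snd (snd (L!k))))" for k
  have Lk: "L!k = (A k, B k, C k, D k, X k)" for k by (simp add: A_def B_def C_def D_def X_def)
  have val: "0 \<le> A k \<and> A k < B k \<and> C k < D k \<and> X k \<in> borel_measurable (F (A k)) \<and> (\<exists>Bd. \<forall>\<omega>\<in>space M. \<bar>X k \<omega>\<bar> \<le> Bd)"
    if "k < n" for k
  proof -
    have "L!k \<in> set L" using that by (simp add: n_def)
    then show ?thesis using V unfolding simple_valid_def Lk by fastforce
  qed
  obtain Bd where Bd: "\<And>k. k < n \<Longrightarrow> \<forall>\<omega>\<in>space M. \<bar>X k \<omega>\<bar> \<le> Bd k"
    using val by metis
  have A0: "0 \<le> A k" "A k \<le> B k" "C k \<le> D k" "X k \<in> borel_measurable (F (A k))" if "k < n" for k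
    using val[OF that] by auto
  have XM: "X k \<in> borel_measurable M" if "k < n" for k using meas_F_M A0(4)[OF that] by blast
  have XX: "integrable M (\<lambda>\<omega>. X k \<omega> * X l \<omega>)" if "k < n" "l < n" for k l
  proof (rule int_bdd_const[where B="Bd k * Bd l"])
    show "(\<lambda>\<omega>. X k \<omega> * X l \<omega>) \<in> borel_measurable M" using XM that by (intro borel_measurable_times)
    show "\<forall>\<omega>\<in>space M. \<bar>X k \<omega> * X l \<omega>\<bar> \<le> Bd k * Bd l"
    proof
      fix \<omega> assume w: "\<omega> \<in> space M"
      have 1: "\<bar>X k \<omega>\<bar> \<le> Bd k" "\<bar>X l \<omega>\<bar> \<le> Bd l" using Bd that w by auto
      then have "0 \<le> Bd k" by linarith
      with 1 show "\<bar>X k \<omega> * X l \<omega>\<bar> \<le> Bd k * Bd l" by (simp add: abs_mult mult_mono)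
    qed
  qed
  define G where "G k l = expectation (\<lambda>\<omega>. X k \<omega> * X l \<omega>) * (ovl (A k) (B k) (A l) (B l) * ovl (C k) (D k) (C l) (D l))" for k l
  define Q where "Q \<omega> = (\<Sum>k<n. \<Sum>l<n. X k \<omega> * X l \<omega> * (ovl (A k) (B k) (A l) (B l) * ovl (C k) (D k) (C l) (D l)))" for \<omega>
  have int_eq: "simple_int W L \<omega> = (\<Sum>k<n. X k \<omega> * R (A k) (B k) (C k) (D k) \<omega>)" for \<omega>
    unfolding simple_int_def sum_list_sum_nth by (simp add: n_def atLeast0LessThan Lk)
  have sq_int: "(simple_int W L \<omega>)\<^sup>2 = (\<Sum>k<n. \<Sum>l<n. X k \<omega> * X l \<omega> * R (A k) (B k) (C k) (D k) \<omega> * R (A l) (B l) (C l) (D l) \<omega>)" for \<omega>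
    unfolding int_eq sum_sq by (simp add: mult_ac)
  have pe: "integrable M (\<lambda>\<omega>. X k \<omega> * X l \<omega> * R (A k) (B k) (C k) (D k) \<omega> * R (A l) (B l) (C l) (D l) \<omega>) \<and>
     expectation (\<lambda>\<omega>. X k \<omega> * X l \<omega> * R (A k) (B k) (C k) (D k) \<omega> * R (A l) (B l) (C l) (D l) \<omega>) = G k l"
    if "k < n" "l < n" for k l
    unfolding G_def using pair_exp[OF A0(1-3)[OF that(1)] A0(1-3)[OF that(2)] A0(4)[OF that(1)] Bd[OF that(1)] A0(4)[OF that(2)] Bd[OF that(2)]] .
  have intR: "integrable M (\<lambda>\<omega>. (simple_int W L \<omega>)\<^sup>2)"
    unfolding sq_int using pe by (intro Bochner_Integration.integrable_sum) auto
  have ER: "expectation (\<lambda>\<omega>. (simple_int W L \<omega>)\<^sup>2) = (\<Sum>k<n. \<Sum>l<n. G k l)"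
  proof -
    have "expectation (\<lambda>\<omega>. (simple_int W L \<omega>)\<^sup>2) =
      (\<Sum>k<n. expectation (\<lambda>\<omega>. \<Sum>l<n. X k \<omega> * X l \<omega> * R (A k) (B k) (C k) (D k) \<omega> * R (A l) (B l) (C l) (D l) \<omega>))"
      unfolding sq_int using pe by (intro Bochner_Integration.integral_sum Bochner_Integration.integrable_sum) auto
    also have "\<dots> = (\<Sum>k<n. \<Sum>l<n. G k l)"
    proof (intro sum.cong refl)
      fix k assume "k \<in> {..<n}"
      then show "expectation (\<lambda>\<omega>. \<Sum>l<n. X k \<omega> * X l \<omega> * R (A k) (B k) (C k) (D k) \<omega> * R (A l) (B l) (C l) (D l) \<omega>) = (\<Sum>l<n. G k l)"
        using pe by (subst Bochner_Integration.integral_sum) auto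
    qed
    finally show ?thesis .
  qed
  have RHS: "(\<integral>\<^sup>+\<omega>. ennreal ((simple_int W L \<omega>)\<^sup>2) \<partial>M) = ennreal (\<Sum>k<n. \<Sum>l<n. G k l)"
    using nn_integral_eq_integral[OF intR] ER by simp
  have ev_eq: "simple_eval L s y \<omega> = (\<Sum>k<n. X k \<omega> * indicator {A k<..B k} s * indicator {C k<..D k} y)" for s y \<omega>
    unfolding simple_eval_def sum_list_sum_nth by (simp add: n_def atLeast0LessThan Lk)
  define P where "P k l z = (indicator {A k<..B k} (fst z) * indicator {C k<..D k} (snd z) *
       (indicator {A l<..B l} (fst z) * indicator {C l<..D l} (snd z)) :: real)" for k l z
  have sq_ev: "(simple_eval L (fst z) (snd z) \<omega>)\<^sup>2 = (\<Sum>k<n. \<Sum>l<n. X k \<omega> * X l \<omega> * P k l z)" for z \<omega>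
    unfolding ev_eq sum_sq P_def by (simp add: mult_ac)
  have inner: "(\<integral>\<^sup>+z. ennreal ((simple_eval L (fst z) (snd z) \<omega>)\<^sup>2) \<partial>(lborel \<Otimes>\<^sub>M lborel)) = ennreal (Q \<omega>)"
    and Qnn: "0 \<le> Q \<omega>" for \<omega>
  proof -
    have iP: "integrable (lborel \<Otimes>\<^sub>M lborel) (P k l)" for k l unfolding P_def by (rule plane_box(1))
    have IP: "integral\<^sup>L (lborel \<Otimes>\<^sub>M lborel) (P k l) = ovl (A k) (B k) (A l) (B l) * ovl (C k) (D k) (C l) (D l)" for k l
      unfolding P_def by (rule plane_box(2))
    have i: "integrable (lborel \<Otimes>\<^sub>M lborel) (\<lambda>z. (simple_eval L (fst z) (snd z) \<omega>)\<^sup>2)"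
      unfolding sq_ev using iP by (intro Bochner_Integration.integrable_sum integrable_mult_right) auto
    have e: "integral\<^sup>L (lborel \<Otimes>\<^sub>M lborel) (\<lambda>z. (simple_eval L (fst z) (snd z) \<omega>)\<^sup>2) = Q \<omega>"
      unfolding sq_ev Q_def using iP IP by (simp add: Bochner_Integration.integral_sum Bochner_Integration.integrable_sum)
    show "(\<integral>\<^sup>+z. ennreal ((simple_eval L (fst z) (snd z) \<omega>)\<^sup>2) \<partial>(lborel \<Otimes>\<^sub>M lborel)) = ennreal (Q \<omega>)"
      using nn_integral_eq_integral[OF i] e by simp
    show "0 \<le> Q \<omega>" using e[symmetric] by simp
  qed
  have intQ: "integrable M Q" unfolding Q_def using XX by (intro Bochner_Integration.integrable_sum integrable_mult_left) auto
  have EQ: "expectation Q = (\<Sum>k<n. \<Sum>l<n. G k l)"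
  proof -
    have "expectation Q = (\<Sum>k<n. expectation (\<lambda>\<omega>. \<Sum>l<n. X k \<omega> * X l \<omega> * (ovl (A k) (B k) (A l) (B l) * ovl (C k) (D k) (C l) (D l))))"
      unfolding Q_def using XX by (intro Bochner_Integration.integral_sum Bochner_Integration.integrable_sum integrable_mult_left) auto
    also have "\<dots> = (\<Sum>k<n. \<Sum>l<n. G k l)"
    proof (intro sum.cong refl)
      fix k assume "k \<in> {..<n}"
      then show "expectation (\<lambda>\<omega>. \<Sum>l<n. X k \<omega> * X l \<omega> * (ovl (A k) (B k) (A l) (B l) * ovl (C k) (D k) (C l) (D l))) = (\<Sum>l<n. G k l)"
        using XX unfolding G_def by (subst Bochner_Integration.integral_sum) (auto intro: integrable_mult_left)
    qed
    finally show ?thesis .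
  qed
  have "(\<integral>\<^sup>+\<omega>. (\<integral>\<^sup>+z. ennreal ((simple_eval L (fst z) (snd z) \<omega>)\<^sup>2) \<partial>(lborel \<Otimes>\<^sub>M lborel)) \<partial>M)
     = (\<integral>\<^sup>+\<omega>. ennreal (Q \<omega>) \<partial>M)" by (simp add: inner)
  also have "\<dots> = ennreal (\<Sum>k<n. \<Sum>l<n. G k l)"
    using nn_integral_eq_integral[OF intQ] Qnn EQ by simp
  finally show ?thesis using RHS by simp
qed

end

lemma sq_ineq:
  fixes x y \<epsilon> :: real
  assumes "0 < \<epsilon>"
  shows "x\<^sup>2 \<le> (1 + \<epsilon>) * y\<^sup>2 + (1 + 1/\<epsilon>) * (x - y)\<^sup>2"
proof -
  define b where "b = x - y"
  have "0 \<le> (\<epsilon> * y - b)\<^sup>2 / \<epsilon>" using assms by simp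
  also have "(\<epsilon> * y - b)\<^sup>2 / \<epsilon> = \<epsilon> * y\<^sup>2 - 2 * y * b + b\<^sup>2 / \<epsilon>"
    using assms by (simp add: field_simps power2_eq_square)
  finally have "2 * y * b \<le> \<epsilon> * y\<^sup>2 + b\<^sup>2 / \<epsilon>" by simp
  moreover have "x = y + b" by (simp add: b_def)
  ultimately show ?thesis unfolding b_def[symmetric] by (simp add: power2_eq_square field_simps)
qed

context bsheet begin

lemma simple_valid_Cons:
  "simple_valid M F (e # L) \<longleftrightarrow> simple_valid M F [e] \<and> simple_valid M F L"
  by (auto simp: simple_valid_def)

lemma simple_eval_meas:
  assumes "simple_valid M F L"
  shows "(\<lambda>(\<omega>, z). simple_eval L (fst z) (snd z) \<omega>) \<in> borel_measurable (M \<Otimes>\<^sub>M (lborel \<Otimes>\<^sub>M lborel))"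
  using assms
proof (induction L)
  case Nil
  then show ?case by (simp add: simple_eval_def)
next
  case (Cons e L)
  obtain a b c d \<xi> where e: "e = (a, b, c, d, \<xi>)" by (cases e) auto
  have v: "\<xi> \<in> borel_measurable (F a)" using Cons.prems e by (simp add: simple_valid_def)
  have [measurable]: "\<xi> \<in> borel_measurable M" using meas_F_M[OF v] .
  have IH[measurable]: "(\<lambda>(\<omega>, z). simple_eval L (fst z) (snd z) \<omega>) \<in> borel_measurable (M \<Otimes>\<^sub>M (lborel \<Otimes>\<^sub>M lborel))"
    using Cons.IH Cons.prems simple_valid_Cons by blast
  have eq: "(\<lambda>(\<omega>, z). simple_eval (e # L) (fst z) (snd z) \<omega>) =
    (\<lambda>p. \<xi> (fst p) * indicator {a<..b} (fst (snd p)) * indicator {c<..d} (snd (snd p)) +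
      (\<lambda>(\<omega>, z). simple_eval L (fst z) (snd z) \<omega>) p)"
    by (simp add: fun_eq_iff e simple_eval_def split_beta)
  show ?case unfolding eq by measurable
qed

lemma simple_int_props0:
  "simple_valid M F L \<Longrightarrow> simple_int W L \<in> borel_measurable M \<and> integrable M (simple_int W L) \<and>
     expectation (simple_int W L) = 0"
proof (induction L)
  case Nil
  then show ?case by (simp add: simple_int_def)
next
  case (Cons e L)
  obtain a b c d \<xi> where e: "e = (a, b, c, d, \<xi>)" by (cases e) auto
  have v: "\<xi> \<in> borel_measurable (F a)" "0 \<le> a" "a < b" "c < d" "\<exists>B. \<forall>\<omega>\<in>space M. \<bar>\<xi> \<omega>\<bar> \<le> B"
    using Cons.prems e by (auto simp: simple_valid_def)
  obtain Bd where Bd: "\<forall>\<omega>\<in>space M. \<bar>\<xi> \<omega>\<bar> \<le> Bd" using v(5) by blast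
  have vL: "simple_valid M F L" using Cons.prems simple_valid_Cons by blast
  note IH = Cons.IH[OF vL]
  have eq: "simple_int W (e # L) = (\<lambda>\<omega>. \<xi> \<omega> * R a b c d \<omega> + simple_int W L \<omega>)"
    by (simp add: fun_eq_iff e simple_int_def)
  have \<xi>i: "integrable M \<xi>" using int_bdd_const[OF meas_F_M[OF v(1)] Bd] .
  note E = E1[OF v(2) _ _ v(1) \<xi>i, of b c d]
  have 1: "simple_int W (e # L) \<in> borel_measurable M" unfolding eq using IH meas_F_M[OF v(1)] R_measM[of a b c d] v
      by (intro borel_measurable_add borel_measurable_times) auto
  have 2: "integrable M (simple_int W (e # L))" unfolding eq using IH E v by auto
  have 3: "expectation (simple_int W (e # L)) = 0" unfolding eq using IH E v by auto
  show ?case using 1 2 3 by simp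
qed

lemma simple_int_props:
  assumes "simple_valid M F L"
  shows "simple_int W L \<in> borel_measurable M" "integrable M (simple_int W L)"
     "expectation (simple_int W L) = 0"
  using simple_int_props0[OF assms] by auto

end

lemma enn_comb:
  fixes a b x y :: real
  assumes "0 \<le> a" "0 \<le> b" "0 \<le> x" "0 \<le> y"
  shows "ennreal (a * x + b * y) = ennreal a * ennreal x + ennreal b * ennreal y"
  using assms by (subst ennreal_plus) (auto simp: ennreal_mult)

context bsheet begin

lemma sq_integrable_add:
  fixes X Y :: "'a \<Rightarrow> real"
  assumes "X \<in> borel_measurable M" "Y \<in> borel_measurable M"
    "integrable M (\<lambda>\<omega>. (X \<omega>)\<^sup>2)" "integrable M (\<lambda>\<omega>. (Y \<omega>)\<^sup>2)"
  shows "integrable M (\<lambda>\<omega>. (X \<omega> + Y \<omega>)\<^sup>2)"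
proof (rule Bochner_Integration.integrable_bound[where f="\<lambda>\<omega>. 2 * (X \<omega>)\<^sup>2 + 2 * (Y \<omega>)\<^sup>2"])
  show "integrable M (\<lambda>\<omega>. 2 * (X \<omega>)\<^sup>2 + 2 * (Y \<omega>)\<^sup>2)" using assms by auto
  show "(\<lambda>\<omega>. (X \<omega> + Y \<omega>)\<^sup>2) \<in> borel_measurable M" using assms by measurable
  show "AE x in M. norm ((X x + Y x)\<^sup>2) \<le> norm (2 * (X x)\<^sup>2 + 2 * (Y x)\<^sup>2)"
  proof (rule AE_I2)
    fix x
    have "0 \<le> (X x - Y x)\<^sup>2" by simp
    then have "(X x + Y x)\<^sup>2 \<le> 2 * (X x)\<^sup>2 + 2 * (Y x)\<^sup>2" by (simp add: power2_eq_square algebra_simps)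
    then show "norm ((X x + Y x)\<^sup>2) \<le> norm (2 * (X x)\<^sup>2 + 2 * (Y x)\<^sup>2)" by simp
  qed
qed

lemma simple_sq0:
  "simple_valid M F L \<Longrightarrow> integrable M (\<lambda>\<omega>. (simple_int W L \<omega>)\<^sup>2)"
proof (induction L)
  case Nil
  then show ?case by (simp add: simple_int_def)
next
  case (Cons e L)
  obtain a b c d \<xi> where e: "e = (a, b, c, d, \<xi>)" by (cases e) auto
  have v: "\<xi> \<in> borel_measurable (F a)" "0 \<le> a" "a < b" "c < d" "\<exists>B. \<forall>\<omega>\<in>space M. \<bar>\<xi> \<omega>\<bar> \<le> B"
    using Cons.prems e by (auto simp: simple_valid_def)
  obtain Bd where Bd: "\<forall>\<omega>\<in>space M. \<bar>\<xi> \<omega>\<bar> \<le> Bd" using v(5) by blast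
  have vL: "simple_valid M F L" using Cons.prems simple_valid_Cons by blast
  have eq: "simple_int W (e # L) = (\<lambda>\<omega>. \<xi> \<omega> * R a b c d \<omega> + simple_int W L \<omega>)"
    by (simp add: fun_eq_iff e simple_int_def)
  have \<xi>M: "\<xi> \<in> borel_measurable M" using meas_F_M[OF v(1)] .
  have RM: "R a b c d \<in> borel_measurable M" using R_measM v by auto
  have i1: "integrable M (\<lambda>\<omega>. (\<xi> \<omega> * R a b c d \<omega>)\<^sup>2)"
  proof -
    have "integrable M (\<lambda>\<omega>. (\<xi> \<omega>)\<^sup>2 * (R a b c d \<omega>)\<^sup>2)"
    proof (rule int_bdd[where B="Bd\<^sup>2"])
      show "integrable M (\<lambda>\<omega>. (R a b c d \<omega>)\<^sup>2)" using R_mom2 v by auto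
      show "(\<lambda>\<omega>. (\<xi> \<omega>)\<^sup>2) \<in> borel_measurable M" using \<xi>M by measurable
      show "\<forall>\<omega>\<in>space M. \<bar>(\<xi> \<omega>)\<^sup>2\<bar> \<le> Bd\<^sup>2"
        using Bd by (metis abs_ge_zero power2_abs power_mono abs_power2)
    qed
    then show ?thesis by (simp add: power_mult_distrib)
  qed
  show ?case unfolding eq
    by (rule sq_integrable_add) (use \<xi>M RM simple_int_props(1)[OF vL] i1 Cons.IH[OF vL] in auto)
qed

lemma sq_le_expect:
  fixes Y :: "'a \<Rightarrow> real"
  assumes "integrable M Y" "integrable M (\<lambda>\<omega>. (Y \<omega>)\<^sup>2)"
  shows "(expectation Y)\<^sup>2 \<le> expectation (\<lambda>\<omega>. (Y \<omega>)\<^sup>2)"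
proof -
  have "0 \<le> expectation (\<lambda>\<omega>. (Y \<omega> - expectation Y)\<^sup>2)" by simp
  then show ?thesis using variance_eq[OF assms] by simp
qed

lemma walsh_props:
  assumes HW: "has_walsh_integral M F W f J"
    and fm: "(\<lambda>(\<omega>, z). f (fst z) (snd z) \<omega>) \<in> borel_measurable (M \<Otimes>\<^sub>M (lborel \<Otimes>\<^sub>M lborel))"
  shows "J \<in> borel_measurable M" "integrable M J" "integrable M (\<lambda>\<omega>. (J \<omega>)\<^sup>2)" "expectation J = 0"
    "\<And>\<epsilon>. 0 < \<epsilon> \<Longrightarrow> (\<integral>\<^sup>+\<omega>. (\<integral>\<^sup>+z. ennreal ((f (fst z) (snd z) \<omega>)\<^sup>2) \<partial>(lborel \<Otimes>\<^sub>M lborel)) \<partial>M)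
        \<le> ennreal ((1 + \<epsilon>)\<^sup>2) * (\<integral>\<^sup>+\<omega>. ennreal ((J \<omega>)\<^sup>2) \<partial>M)"
proof -
  obtain Ls where JM: "J \<in> borel_measurable M" and V: "\<And>n. simple_valid M F (Ls n)"
    and dlim: "(\<lambda>n. field_dist2 M f (simple_eval (Ls n))) \<longlonglongrightarrow> 0"
    and elim: "(\<lambda>n. \<integral>\<^sup>+ \<omega>. ennreal ((J \<omega> - simple_int W (Ls n) \<omega>)\<^sup>2) \<partial>M) \<longlonglongrightarrow> 0"
    using HW unfolding has_walsh_integral_def by blast
  define S where "S n = simple_int W (Ls n)" for n
  define e where "e n = (\<integral>\<^sup>+ \<omega>. ennreal ((J \<omega> - S n \<omega>)\<^sup>2) \<partial>M)" for n
  define d where "d n = field_dist2 M f (simple_eval (Ls n))" for n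
  have SM: "S n \<in> borel_measurable M" "integrable M (S n)" "expectation (S n) = 0"
     "integrable M (\<lambda>\<omega>. (S n \<omega>)\<^sup>2)" for n
    unfolding S_def using simple_int_props[OF V] simple_sq0[OF V] by auto
  show "J \<in> borel_measurable M" by (rule JM)
  have elim': "e \<longlonglongrightarrow> 0" using elim by (simp add: e_def[abs_def] S_def)
  then have "eventually (\<lambda>n. e n < 1) sequentially" by (rule order_tendstoD) simp
  then obtain N where N: "e N < 1" by (auto simp: eventually_sequentially)
  have JS: "(\<lambda>\<omega>. J \<omega> - S N \<omega>) \<in> borel_measurable M" using JM SM by measurable
  have "(\<integral>\<^sup>+\<omega>. ennreal (norm ((J \<omega>)\<^sup>2)) \<partial>M) \<le> (\<integral>\<^sup>+\<omega>. ennreal (2 * (J \<omega> - S N \<omega>)\<^sup>2) + ennreal (2 * (S N \<omega>)\<^sup>2) \<partial>M)"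
  proof (rule nn_integral_mono)
    fix \<omega>
    have "0 \<le> (J \<omega> - 2 * S N \<omega>)\<^sup>2" by simp
    then have "(J \<omega>)\<^sup>2 \<le> 2 * (J \<omega> - S N \<omega>)\<^sup>2 + 2 * (S N \<omega>)\<^sup>2" by (simp add: power2_eq_square algebra_simps)
    then show "ennreal (norm ((J \<omega>)\<^sup>2)) \<le> ennreal (2 * (J \<omega> - S N \<omega>)\<^sup>2) + ennreal (2 * (S N \<omega>)\<^sup>2)"
      by (simp add: ennreal_plus[symmetric] del: ennreal_plus)
  qed
  also have "\<dots> = 2 * e N + (\<integral>\<^sup>+\<omega>. ennreal (2 * (S N \<omega>)\<^sup>2) \<partial>M)"
  proof -
    have "(\<integral>\<^sup>+\<omega>. ennreal (2 * (J \<omega> - S N \<omega>)\<^sup>2) + ennreal (2 * (S N \<omega>)\<^sup>2) \<partial>M) =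
      (\<integral>\<^sup>+\<omega>. ennreal (2 * (J \<omega> - S N \<omega>)\<^sup>2) \<partial>M) + (\<integral>\<^sup>+\<omega>. ennreal (2 * (S N \<omega>)\<^sup>2) \<partial>M)"
      using JS SM by (intro nn_integral_add) auto
    moreover have "(\<integral>\<^sup>+\<omega>. ennreal (2 * (J \<omega> - S N \<omega>)\<^sup>2) \<partial>M) = 2 * e N"
    proof -
      have "(\<integral>\<^sup>+\<omega>. ennreal (2 * (J \<omega> - S N \<omega>)\<^sup>2) \<partial>M) = (\<integral>\<^sup>+\<omega>. 2 * ennreal ((J \<omega> - S N \<omega>)\<^sup>2) \<partial>M)"
        by (simp add: ennreal_mult)
      also have "\<dots> = 2 * e N" unfolding e_def using JS by (intro nn_integral_cmult) auto
      finally show ?thesis .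
    qed
    ultimately show ?thesis by simp
  qed
  also have "(\<integral>\<^sup>+\<omega>. ennreal (2 * (S N \<omega>)\<^sup>2) \<partial>M) = ennreal (expectation (\<lambda>\<omega>. 2 * (S N \<omega>)\<^sup>2))"
    using SM by (intro nn_integral_eq_integral) auto
  also have "2 * e N + \<dots> < \<infinity>" using N order.strict_trans[OF N, of \<top>] by (simp add: ennreal_mult_less_top)
  finally have fin: "(\<integral>\<^sup>+\<omega>. ennreal (norm ((J \<omega>)\<^sup>2)) \<partial>M) < \<infinity>" .
  show J2: "integrable M (\<lambda>\<omega>. (J \<omega>)\<^sup>2)"
    by (rule integrableI_bounded) (use JM fin in auto)
  show J1: "integrable M J"
  proof (rule Bochner_Integration.integrable_bound[where f="\<lambda>\<omega>. 1 + (J \<omega>)\<^sup>2"])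
    show "integrable M (\<lambda>\<omega>. 1 + (J \<omega>)\<^sup>2)" using J2 by simp
    show "J \<in> borel_measurable M" by (rule JM)
    show "AE x in M. norm (J x) \<le> norm (1 + (J x)\<^sup>2)"
    proof (rule AE_I2)
      fix x
      have "0 \<le> (\<bar>J x\<bar> - 1)\<^sup>2" by simp
      then have "\<bar>J x\<bar> \<le> 1 + (J x)\<^sup>2" by (simp add: power2_eq_square algebra_simps abs_mult_self_eq)
      then show "norm (J x) \<le> norm (1 + (J x)\<^sup>2)" by simp
    qed
  qed
  have "ennreal ((expectation J)\<^sup>2) \<le> e n" for n
  proof -
    have i1: "integrable M (\<lambda>\<omega>. J \<omega> - S n \<omega>)" using J1 SM by auto
    have i2: "integrable M (\<lambda>\<omega>. (J \<omega> - S n \<omega>)\<^sup>2)"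
      using sq_integrable_add[of J "\<lambda>\<omega>. - S n \<omega>"] JM SM J2 by simp
    have "expectation J = expectation (\<lambda>\<omega>. J \<omega> - S n \<omega>)" using J1 SM by simp
    then have "(expectation J)\<^sup>2 \<le> expectation (\<lambda>\<omega>. (J \<omega> - S n \<omega>)\<^sup>2)"
      using sq_le_expect[OF i1 i2] by simp
    also have "ennreal \<dots> = e n" unfolding e_def using i2 by (intro nn_integral_eq_integral[symmetric]) auto
    finally show ?thesis by (simp add: ennreal_leI)
  qed
  then have "ennreal ((expectation J)\<^sup>2) \<le> 0" using elim' by (intro LIMSEQ_le_const) auto
  then show "expectation J = 0" by simp
  fix \<epsilon> :: real assume \<epsilon>: "0 < \<epsilon>"
  define c1 where "c1 = ennreal (1 + \<epsilon>)"
  define c2 where "c2 = ennreal (1 + 1/\<epsilon>)"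
  define IJ where "IJ = (\<integral>\<^sup>+\<omega>. ennreal ((J \<omega>)\<^sup>2) \<partial>M)"
  define LHS where "LHS = (\<integral>\<^sup>+\<omega>. (\<integral>\<^sup>+z. ennreal ((f (fst z) (snd z) \<omega>)\<^sup>2) \<partial>(lborel \<Otimes>\<^sub>M lborel)) \<partial>M)"
  have bound: "LHS \<le> c1 * (c1 * IJ + c2 * e n) + c2 * d n" for n
  proof -
    define g where "g = (\<lambda>(\<omega>, z). simple_eval (Ls n) (fst z) (snd z) \<omega>)"
    have gm[measurable]: "g \<in> borel_measurable (M \<Otimes>\<^sub>M (lborel \<Otimes>\<^sub>M lborel))"
      unfolding g_def by (rule simple_eval_meas[OF V])
    have fm'[measurable]: "(\<lambda>(\<omega>, z). f (fst z) (snd z) \<omega>) \<in> borel_measurable (M \<Otimes>\<^sub>M (lborel \<Otimes>\<^sub>M lborel))"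
      by (rule fm)
    have m1: "(\<lambda>p. ennreal (((\<lambda>(\<omega>, z). f (fst z) (snd z) \<omega>) p)\<^sup>2)) \<in> borel_measurable (M \<Otimes>\<^sub>M (lborel \<Otimes>\<^sub>M lborel))" by measurable
    have m2: "(\<lambda>p. ennreal ((g p)\<^sup>2)) \<in> borel_measurable (M \<Otimes>\<^sub>M (lborel \<Otimes>\<^sub>M lborel))" by measurable
    have m3: "(\<lambda>p. ennreal (((\<lambda>(\<omega>, z). f (fst z) (snd z) \<omega>) p - g p)\<^sup>2)) \<in> borel_measurable (M \<Otimes>\<^sub>M (lborel \<Otimes>\<^sub>M lborel))" by measurable
    have inner: "(\<integral>\<^sup>+z. ennreal ((f (fst z) (snd z) \<omega>)\<^sup>2) \<partial>(lborel \<Otimes>\<^sub>M lborel)) \<le>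
        c1 * (\<integral>\<^sup>+z. ennreal ((g (\<omega>, z))\<^sup>2) \<partial>(lborel \<Otimes>\<^sub>M lborel)) +
        c2 * (\<integral>\<^sup>+z. ennreal ((f (fst z) (snd z) \<omega> - g (\<omega>, z))\<^sup>2) \<partial>(lborel \<Otimes>\<^sub>M lborel))"
      if w: "\<omega> \<in> space M" for \<omega>
    proof -
      have mz2: "(\<lambda>z. ennreal ((g (\<omega>, z))\<^sup>2)) \<in> borel_measurable (lborel \<Otimes>\<^sub>M lborel)"
        using measurable_Pair2[OF m2 w] by simp
      have mz3: "(\<lambda>z. ennreal ((f (fst z) (snd z) \<omega> - g (\<omega>, z))\<^sup>2)) \<in> borel_measurable (lborel \<Otimes>\<^sub>M lborel)"
        using measurable_Pair2[OF m3 w] by simp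
      have "(\<integral>\<^sup>+z. ennreal ((f (fst z) (snd z) \<omega>)\<^sup>2) \<partial>(lborel \<Otimes>\<^sub>M lborel)) \<le>
          (\<integral>\<^sup>+z. c1 * ennreal ((g (\<omega>, z))\<^sup>2) + c2 * ennreal ((f (fst z) (snd z) \<omega> - g (\<omega>, z))\<^sup>2) \<partial>(lborel \<Otimes>\<^sub>M lborel))"
      proof (rule nn_integral_mono)
        fix z
        have "(f (fst z) (snd z) \<omega>)\<^sup>2 \<le> (1 + \<epsilon>) * (g (\<omega>, z))\<^sup>2 + (1 + 1/\<epsilon>) * (f (fst z) (snd z) \<omega> - g (\<omega>, z))\<^sup>2"
          by (rule sq_ineq[OF \<epsilon>])
        then have "ennreal ((f (fst z) (snd z) \<omega>)\<^sup>2) \<le> ennreal ((1 + \<epsilon>) * (g (\<omega>, z))\<^sup>2 + (1 + 1/\<epsilon>) * (f (fst z) (snd z) \<omega> - g (\<omega>, z))\<^sup>2)"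
          by (rule ennreal_leI)
        also have "\<dots> = c1 * ennreal ((g (\<omega>, z))\<^sup>2) + c2 * ennreal ((f (fst z) (snd z) \<omega> - g (\<omega>, z))\<^sup>2)"
          using \<epsilon> unfolding c1_def c2_def by (intro enn_comb) auto
        finally show "ennreal ((f (fst z) (snd z) \<omega>)\<^sup>2) \<le> c1 * ennreal ((g (\<omega>, z))\<^sup>2) + c2 * ennreal ((f (fst z) (snd z) \<omega> - g (\<omega>, z))\<^sup>2)" .
      qed
      also have "\<dots> = c1 * (\<integral>\<^sup>+z. ennreal ((g (\<omega>, z))\<^sup>2) \<partial>(lborel \<Otimes>\<^sub>M lborel)) +
        c2 * (\<integral>\<^sup>+z. ennreal ((f (fst z) (snd z) \<omega> - g (\<omega>, z))\<^sup>2) \<partial>(lborel \<Otimes>\<^sub>M lborel))"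
        using mz2 mz3 by (simp add: nn_integral_add nn_integral_cmult)
      finally show ?thesis .
    qed
    have om2: "(\<lambda>\<omega>. \<integral>\<^sup>+z. ennreal ((g (\<omega>, z))\<^sup>2) \<partial>(lborel \<Otimes>\<^sub>M lborel)) \<in> borel_measurable M"
      using lborel_pair.P.borel_measurable_nn_integral_fst[OF m2] by simp
    have om3: "(\<lambda>\<omega>. \<integral>\<^sup>+z. ennreal ((f (fst z) (snd z) \<omega> - g (\<omega>, z))\<^sup>2) \<partial>(lborel \<Otimes>\<^sub>M lborel)) \<in> borel_measurable M"
      using lborel_pair.P.borel_measurable_nn_integral_fst[OF m3] by simp
    have "LHS \<le> (\<integral>\<^sup>+\<omega>. c1 * (\<integral>\<^sup>+z. ennreal ((g (\<omega>, z))\<^sup>2) \<partial>(lborel \<Otimes>\<^sub>M lborel)) +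
        c2 * (\<integral>\<^sup>+z. ennreal ((f (fst z) (snd z) \<omega> - g (\<omega>, z))\<^sup>2) \<partial>(lborel \<Otimes>\<^sub>M lborel)) \<partial>M)"
      unfolding LHS_def using inner by (intro nn_integral_mono) auto
    also have "\<dots> = c1 * (\<integral>\<^sup>+\<omega>. (\<integral>\<^sup>+z. ennreal ((g (\<omega>, z))\<^sup>2) \<partial>(lborel \<Otimes>\<^sub>M lborel)) \<partial>M) +
        c2 * (\<integral>\<^sup>+\<omega>. (\<integral>\<^sup>+z. ennreal ((f (fst z) (snd z) \<omega> - g (\<omega>, z))\<^sup>2) \<partial>(lborel \<Otimes>\<^sub>M lborel)) \<partial>M)"
      using om2 om3 by (simp add: nn_integral_add nn_integral_cmult)
    also have "(\<integral>\<^sup>+\<omega>. (\<integral>\<^sup>+z. ennreal ((f (fst z) (snd z) \<omega> - g (\<omega>, z))\<^sup>2) \<partial>(lborel \<Otimes>\<^sub>M lborel)) \<partial>M) = d n"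
      by (simp add: d_def field_dist2_def g_def)
    also have "(\<integral>\<^sup>+\<omega>. (\<integral>\<^sup>+z. ennreal ((g (\<omega>, z))\<^sup>2) \<partial>(lborel \<Otimes>\<^sub>M lborel)) \<partial>M) = (\<integral>\<^sup>+\<omega>. ennreal ((S n \<omega>)\<^sup>2) \<partial>M)"
      unfolding g_def S_def using simple_iso[OF V] by simp
    also have "(\<integral>\<^sup>+\<omega>. ennreal ((S n \<omega>)\<^sup>2) \<partial>M) \<le> c1 * IJ + c2 * e n"
    proof -
      have "(\<integral>\<^sup>+\<omega>. ennreal ((S n \<omega>)\<^sup>2) \<partial>M) \<le> (\<integral>\<^sup>+\<omega>. c1 * ennreal ((J \<omega>)\<^sup>2) + c2 * ennreal ((J \<omega> - S n \<omega>)\<^sup>2) \<partial>M)"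
      proof (rule nn_integral_mono)
        fix \<omega>
        have "(S n \<omega>)\<^sup>2 \<le> (1 + \<epsilon>) * (J \<omega>)\<^sup>2 + (1 + 1/\<epsilon>) * (S n \<omega> - J \<omega>)\<^sup>2" by (rule sq_ineq[OF \<epsilon>])
        also have "(S n \<omega> - J \<omega>)\<^sup>2 = (J \<omega> - S n \<omega>)\<^sup>2" by (simp add: power2_commute)
        finally have "ennreal ((S n \<omega>)\<^sup>2) \<le> ennreal ((1 + \<epsilon>) * (J \<omega>)\<^sup>2 + (1 + 1/\<epsilon>) * (J \<omega> - S n \<omega>)\<^sup>2)"
          by (rule ennreal_leI)
        also have "\<dots> = c1 * ennreal ((J \<omega>)\<^sup>2) + c2 * ennreal ((J \<omega> - S n \<omega>)\<^sup>2)"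
          using \<epsilon> unfolding c1_def c2_def by (intro enn_comb) auto
        finally show "ennreal ((S n \<omega>)\<^sup>2) \<le> c1 * ennreal ((J \<omega>)\<^sup>2) + c2 * ennreal ((J \<omega> - S n \<omega>)\<^sup>2)" .
      qed
      also have "\<dots> = c1 * IJ + c2 * e n"
        unfolding IJ_def e_def using JM SM by (simp add: nn_integral_add nn_integral_cmult)
      finally show ?thesis .
    qed
    finally show ?thesis by (simp add: mult_left_mono add_right_mono)
  qed
  have lim: "(\<lambda>n. c1 * (c1 * IJ + c2 * e n) + c2 * d n) \<longlonglongrightarrow> c1 * (c1 * IJ + c2 * 0) + c2 * 0"
  proof -
    have c: "c1 < \<top>" "c2 < \<top>" by (simp_all add: c1_def c2_def)
    have dl: "d \<longlonglongrightarrow> 0" using dlim by (simp add: d_def[abs_def])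
    show ?thesis
      by (intro tendsto_add ennreal_tendsto_cmult[OF c(1)] ennreal_tendsto_cmult[OF c(2)] tendsto_const elim' dl)
  qed
  have "LHS \<le> c1 * (c1 * IJ + c2 * 0) + c2 * 0"
    by (rule LIMSEQ_le_const[OF lim]) (use bound in auto)
  also have "\<dots> = ennreal ((1 + \<epsilon>)\<^sup>2) * IJ"
  proof -
    have "c1 * c1 = ennreal ((1 + \<epsilon>)\<^sup>2)" unfolding c1_def power2_eq_square
      using \<epsilon> by (intro ennreal_mult[symmetric]) auto
    then show ?thesis by (simp add: mult.assoc[symmetric])
  qed
  finally show "(\<integral>\<^sup>+\<omega>. (\<integral>\<^sup>+z. ennreal ((f (fst z) (snd z) \<omega>)\<^sup>2) \<partial>(lborel \<Otimes>\<^sub>M lborel)) \<partial>M)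
        \<le> ennreal ((1 + \<epsilon>)\<^sup>2) * (\<integral>\<^sup>+\<omega>. ennreal ((J \<omega>)\<^sup>2) \<partial>M)" unfolding LHS_def IJ_def .
qed

end

lemma Ici_borel_real[measurable]: "{a..} \<in> sets (borel :: real measure)" "{a..b} \<in> sets (borel :: real measure)" by auto

lemma erlang1_integral:
  fixes \<beta> :: real assumes "0 < \<beta>"
  shows "(\<integral>\<^sup>+r. ennreal (indicator {0..} r * r * exp (- \<beta> * r)) \<partial>lborel) = ennreal (1 / \<beta>\<^sup>2)"
proof -
  interpret prob_space "density lborel (\<lambda>x. ennreal (erlang_density 1 \<beta> x))"
    using prob_space_erlang_density[OF assms] .
  have "1 = emeasure (density lborel (\<lambda>x. ennreal (erlang_density 1 \<beta> x))) UNIV"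
    using emeasure_space_1 by simp
  also have "\<dots> = (\<integral>\<^sup>+x. ennreal (erlang_density 1 \<beta> x) \<partial>lborel)"
    by (subst emeasure_density) auto
  also have "\<dots> = (\<integral>\<^sup>+x. ennreal (\<beta>\<^sup>2) * ennreal (indicator {0..} x * x * exp (- \<beta> * x)) \<partial>lborel)"
  proof (intro nn_integral_cong)
    fix x :: real
    have e: "erlang_density 1 \<beta> x = \<beta>\<^sup>2 * (indicator {0..} x * x * exp (- \<beta> * x))"
      by (simp add: erlang_density_def indicator_def power2_eq_square)
    have nn: "0 \<le> indicator {0..} x * x * exp (- \<beta> * x)" by (simp add: indicator_def)
    show "ennreal (erlang_density 1 \<beta> x) = ennreal (\<beta>\<^sup>2) * ennreal (indicator {0..} x * x * exp (- \<beta> * x))"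
      unfolding e using nn by (simp add: ennreal_mult)
  qed
  also have "\<dots> = ennreal (\<beta>\<^sup>2) * (\<integral>\<^sup>+r. ennreal (indicator {0..} r * r * exp (- \<beta> * r)) \<partial>lborel)"
    by (intro nn_integral_cmult) auto
  finally have eq: "ennreal (\<beta>\<^sup>2) * (\<integral>\<^sup>+r. ennreal (indicator {0..} r * r * exp (- \<beta> * r)) \<partial>lborel) = 1" ..
  define X where "X = (\<integral>\<^sup>+r. ennreal (indicator {0..} r * r * exp (- \<beta> * r)) \<partial>lborel)"
  have c: "ennreal (1 / \<beta>\<^sup>2) * ennreal (\<beta>\<^sup>2) = 1"
    using assms by (simp add: ennreal_mult[symmetric])
  have "X = (ennreal (1 / \<beta>\<^sup>2) * ennreal (\<beta>\<^sup>2)) * X" using c by simp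
  also have "\<dots> = ennreal (1 / \<beta>\<^sup>2) * (ennreal (\<beta>\<^sup>2) * X)" by (simp add: mult.assoc)
  also have "\<dots> = ennreal (1 / \<beta>\<^sup>2)" using eq by (simp add: X_def)
  finally show ?thesis by (simp add: X_def)
qed

lemma laplace_shift:
  fixes \<beta> s :: real assumes "0 < \<beta>"
  shows "(\<integral>\<^sup>+t. indicator {s..} t * ennreal (exp (- \<beta> * t) * (t - s)) \<partial>lborel) = ennreal (exp (- \<beta> * s) / \<beta>\<^sup>2)"
proof -
  have "(\<integral>\<^sup>+t. indicator {s..} t * ennreal (exp (- \<beta> * t) * (t - s)) \<partial>lborel)
      = ennreal \<bar>1\<bar> * (\<integral>\<^sup>+r. indicator {s..} (s + 1 * r) * ennreal (exp (- \<beta> * (s + 1 * r)) * ((s + 1 * r) - s)) \<partial>lborel)"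
    by (rule nn_integral_real_affine) auto
  also have "\<dots> = (\<integral>\<^sup>+r. ennreal (exp (- \<beta> * s)) * ennreal (indicator {0..} r * r * exp (- \<beta> * r)) \<partial>lborel)"
  proof -
    have "indicator {s..} (s + 1 * r) * ennreal (exp (- \<beta> * (s + 1 * r)) * ((s + 1 * r) - s)) =
       ennreal (exp (- \<beta> * s)) * ennreal (indicator {0..} r * r * exp (- \<beta> * r))" for r :: real
    proof (cases "0 \<le> r")
      case True
      have "exp (- \<beta> * (s + r)) * r = exp (- \<beta> * s) * (r * exp (- \<beta> * r))"
        by (simp add: algebra_simps exp_add[symmetric])
      then show ?thesis using True by (simp add: ennreal_mult[symmetric] indicator_def)
    next
      case False
      then show ?thesis by (simp add: indicator_def)
    qed
    then show ?thesis by simp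
  qed
  also have "\<dots> = ennreal (exp (- \<beta> * s)) * ennreal (1 / \<beta>\<^sup>2)"
    using erlang1_integral[OF assms] by (subst nn_integral_cmult) auto
  also have "\<dots> = ennreal (exp (- \<beta> * s) / \<beta>\<^sup>2)" by (simp add: ennreal_mult[symmetric])
  finally show ?thesis .
qed

lemma length_bound:
  fixes \<kappa> \<alpha> t s y :: real
  assumes "0 < \<alpha>" "\<alpha> < \<kappa>" "0 \<le> s" "s \<le> t" "0 \<le> y - \<alpha> * s"
  shows "ennreal ((\<kappa> - \<alpha>) * (t - s)) \<le> (\<integral>\<^sup>+x. indicator {0..} (x - \<alpha> * t) *
     (indicator {0..} (y - x + \<kappa> * (t - s)) * indicator {0..} (x + \<kappa> * (t - s) - y)) \<partial>lborel)"
proof -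
  have "ennreal ((\<kappa> - \<alpha>) * (t - s)) = emeasure lborel {y + \<alpha> * (t - s) .. y + \<kappa> * (t - s)}"
  proof -
    have "0 \<le> (\<kappa> - \<alpha>) * (t - s)" using assms by simp
    then show ?thesis using assms by (subst emeasure_lborel_Icc) (auto simp: algebra_simps)
  qed
  also have "\<dots> = (\<integral>\<^sup>+x. indicator {y + \<alpha> * (t - s) .. y + \<kappa> * (t - s)} x \<partial>lborel)"
    by simp
  also have "\<dots> \<le> (\<integral>\<^sup>+x. indicator {0..} (x - \<alpha> * t) *
     (indicator {0..} (y - x + \<kappa> * (t - s)) * indicator {0..} (x + \<kappa> * (t - s) - y)) \<partial>lborel)"
  proof (rule nn_integral_mono)
    fix x
    show "indicator {y + \<alpha> * (t - s) .. y + \<kappa> * (t - s)} x \<le> (indicator {0..} (x - \<alpha> * t) *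
     (indicator {0..} (y - x + \<kappa> * (t - s)) * indicator {0..} (x + \<kappa> * (t - s) - y)) :: ennreal)"
    proof (cases "x \<in> {y + \<alpha> * (t - s) .. y + \<kappa> * (t - s)}")
      case True
      then have x1: "y + \<alpha> * (t - s) \<le> x" "x \<le> y + \<kappa> * (t - s)" by auto
      have "\<alpha> * (t - s) \<ge> 0" using assms by simp
      have "\<kappa> * (t - s) \<ge> 0" using assms by simp
      then have "0 \<le> x - \<alpha> * t" using x1 assms by (simp add: algebra_simps)
      moreover have "0 \<le> y - x + \<kappa> * (t - s)" using x1 by simp
      moreover have "0 \<le> x + \<kappa> * (t - s) - y"
        using x1 \<open>\<alpha> * (t - s) \<ge> 0\<close> \<open>\<kappa> * (t - s) \<ge> 0\<close> by linarith
      ultimately show ?thesis using True by (simp add: indicator_def)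
    next
      case False
      then show ?thesis by simp
    qed
  qed
  finally show ?thesis .
qed

lemma AN:
  fixes m :: "real \<times> real \<Rightarrow> ennreal" and \<kappa> \<alpha> \<beta> a b :: real
  assumes mm[measurable]: "m \<in> borel_measurable (lborel \<Otimes>\<^sub>M lborel)"
    and \<alpha>: "0 < \<alpha>" "\<alpha> < \<kappa>" and \<beta>: "0 < \<beta>" and b: "0 < b" and ab: "b * \<beta>\<^sup>2 < a * (\<kappa> - \<alpha>)"
    and R2: "\<And>t x. 0 \<le> t \<Longrightarrow> ennreal a * (\<integral>\<^sup>+s. \<integral>\<^sup>+y. indicator {0..t} s * indicator {0..} (y - x + \<kappa> * (t - s)) *
         indicator {0..} (x + \<kappa> * (t - s) - y) * m (s, y) \<partial>lborel \<partial>lborel) \<le> ennreal b * m (t, x)"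
    and pos: "(\<integral>\<^sup>+t. indicator {0..} t * ennreal (exp (- \<beta> * t)) * (\<integral>\<^sup>+x. indicator {0..} (x - \<alpha> * t) * m (t, x) \<partial>lborel) \<partial>lborel) \<noteq> 0"
  shows "(\<integral>\<^sup>+t. indicator {0..} t * ennreal (exp (- \<beta> * t)) * (\<integral>\<^sup>+x. indicator {0..} (x - \<alpha> * t) * m (t, x) \<partial>lborel) \<partial>lborel) = \<infinity>"
proof -
  have p0: "0 < b * \<beta>\<^sup>2" using b \<beta> by simp
  then have "0 < a * (\<kappa> - \<alpha>)" using ab by linarith
  then have a: "0 < a" using \<alpha> by (simp add: zero_less_mult_iff)
  define B where "B t = (\<integral>\<^sup>+x. indicator {0..} (x - \<alpha> * t) * m (t, x) \<partial>lborel)" for t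
  define H where "H = (\<integral>\<^sup>+t. indicator {0..} t * ennreal (exp (- \<beta> * t)) * B t \<partial>lborel)"
  have Bm[measurable]: "B \<in> borel_measurable lborel"
    unfolding B_def by measurable
  have S2: "ennreal a * (\<integral>\<^sup>+s. indicator {0..t} s * ennreal ((\<kappa> - \<alpha>) * (t - s)) * B s \<partial>lborel) \<le> ennreal b * B t"
    if t: "0 \<le> t" for t
  proof -
    define G where "G x s y = indicator {0..} (x - \<alpha> * t) * (indicator {0..t} s * indicator {0..} (y - x + \<kappa> * (t - s)) *
         indicator {0..} (x + \<kappa> * (t - s) - y) * m (s, y))" for x s y
    have Gm: "(\<lambda>p. G (fst (fst p)) (snd (fst p)) (snd p)) \<in> borel_measurable ((lborel \<Otimes>\<^sub>M lborel) \<Otimes>\<^sub>M lborel)"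
      unfolding G_def by measurable
    have Gm2: "(\<lambda>p. G (fst p) s (snd p)) \<in> borel_measurable (lborel \<Otimes>\<^sub>M lborel)" for s
      unfolding G_def by measurable
    have C1: "ennreal a * (\<integral>\<^sup>+x. \<integral>\<^sup>+s. \<integral>\<^sup>+y. G x s y \<partial>lborel \<partial>lborel \<partial>lborel) \<le> ennreal b * B t"
    proof -
      have "ennreal b * B t = (\<integral>\<^sup>+x. indicator {0..} (x - \<alpha> * t) * (ennreal b * m (t, x)) \<partial>lborel)"
      proof -
        have mx: "(\<lambda>x. indicator {0..} (x - \<alpha> * t) * m (t, x)) \<in> borel_measurable lborel" by measurable
        have "ennreal b * B t = (\<integral>\<^sup>+x. ennreal b * (indicator {0..} (x - \<alpha> * t) * m (t, x)) \<partial>lborel)"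
          unfolding B_def by (rule nn_integral_cmult[OF mx, symmetric])
        also have "\<dots> = (\<integral>\<^sup>+x. indicator {0..} (x - \<alpha> * t) * (ennreal b * m (t, x)) \<partial>lborel)"
          by (rule nn_integral_cong) (rule mult.left_commute)
        finally show ?thesis .
      qed
      also have "\<dots> \<ge> (\<integral>\<^sup>+x. indicator {0..} (x - \<alpha> * t) * (ennreal a * (\<integral>\<^sup>+s. \<integral>\<^sup>+y. indicator {0..t} s * indicator {0..} (y - x + \<kappa> * (t - s)) *
           indicator {0..} (x + \<kappa> * (t - s) - y) * m (s, y) \<partial>lborel \<partial>lborel)) \<partial>lborel)"
        by (intro nn_integral_mono mult_left_mono R2[OF t]) auto
      also have "(\<integral>\<^sup>+x. indicator {0..} (x - \<alpha> * t) * (ennreal a * (\<integral>\<^sup>+s. \<integral>\<^sup>+y. indicator {0..t} s * indicator {0..} (y - x + \<kappa> * (t - s)) *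
           indicator {0..} (x + \<kappa> * (t - s) - y) * m (s, y) \<partial>lborel \<partial>lborel)) \<partial>lborel)
         = ennreal a * (\<integral>\<^sup>+x. \<integral>\<^sup>+s. \<integral>\<^sup>+y. G x s y \<partial>lborel \<partial>lborel \<partial>lborel)"
      proof -
        have "indicator {0..} (x - \<alpha> * t) * (ennreal a * (\<integral>\<^sup>+s. \<integral>\<^sup>+y. indicator {0..t} s * indicator {0..} (y - x + \<kappa> * (t - s)) *
           indicator {0..} (x + \<kappa> * (t - s) - y) * m (s, y) \<partial>lborel \<partial>lborel)) =
           ennreal a * (\<integral>\<^sup>+s. \<integral>\<^sup>+y. G x s y \<partial>lborel \<partial>lborel)" for x
          unfolding G_def
          by (subst nn_integral_cmult[symmetric], measurable)+ (simp add: mult_ac)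
        moreover have Gx: "(\<lambda>x. \<integral>\<^sup>+s. \<integral>\<^sup>+y. G x s y \<partial>lborel \<partial>lborel) \<in> borel_measurable lborel"
        proof -
          have "(\<lambda>q. \<integral>\<^sup>+y. G (fst q) (snd q) y \<partial>lborel) \<in> borel_measurable (lborel \<Otimes>\<^sub>M lborel)"
            using lborel.borel_measurable_nn_integral_fst[OF Gm] by simp
          from lborel.borel_measurable_nn_integral_fst[OF this] show ?thesis by simp
        qed
        ultimately show ?thesis by (simp add: nn_integral_cmult[OF Gx])
      qed
      finally show ?thesis .
    qed
    have C2: "(\<integral>\<^sup>+x. \<integral>\<^sup>+s. \<integral>\<^sup>+y. G x s y \<partial>lborel \<partial>lborel \<partial>lborel) = (\<integral>\<^sup>+s. \<integral>\<^sup>+y. \<integral>\<^sup>+x. G x s y \<partial>lborel \<partial>lborel \<partial>lborel)"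
    proof -
      have "(\<lambda>(x, s). \<integral>\<^sup>+y. G x s y \<partial>lborel) \<in> borel_measurable (lborel \<Otimes>\<^sub>M lborel)"
        using lborel.borel_measurable_nn_integral_fst[OF Gm] by (simp add: split_beta)
      then have "(\<integral>\<^sup>+x. \<integral>\<^sup>+s. \<integral>\<^sup>+y. G x s y \<partial>lborel \<partial>lborel \<partial>lborel) = (\<integral>\<^sup>+s. \<integral>\<^sup>+x. \<integral>\<^sup>+y. G x s y \<partial>lborel \<partial>lborel \<partial>lborel)"
        by (rule lborel_pair.Fubini'[symmetric])
      also have "\<dots> = (\<integral>\<^sup>+s. \<integral>\<^sup>+y. \<integral>\<^sup>+x. G x s y \<partial>lborel \<partial>lborel \<partial>lborel)"
      proof (rule nn_integral_cong)
        fix s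
        have "(\<lambda>(x, y). G x s y) \<in> borel_measurable (lborel \<Otimes>\<^sub>M lborel)"
          using Gm2[of s] by (simp add: split_beta)
        then show "(\<integral>\<^sup>+x. \<integral>\<^sup>+y. G x s y \<partial>lborel \<partial>lborel) = (\<integral>\<^sup>+y. \<integral>\<^sup>+x. G x s y \<partial>lborel \<partial>lborel)"
          by (rule lborel_pair.Fubini'[symmetric])
      qed
      finally show ?thesis .
    qed
    have C3: "(\<integral>\<^sup>+s. \<integral>\<^sup>+y. indicator {0..t} s * ennreal ((\<kappa> - \<alpha>) * (t - s)) * (indicator {0..} (y - \<alpha> * s) * m (s, y)) \<partial>lborel \<partial>lborel)
        \<le> (\<integral>\<^sup>+s. \<integral>\<^sup>+y. \<integral>\<^sup>+x. G x s y \<partial>lborel \<partial>lborel \<partial>lborel)"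
    proof (intro nn_integral_mono)
      fix s y
      have eqx: "(\<integral>\<^sup>+x. G x s y \<partial>lborel) = indicator {0..t} s * m (s, y) * (\<integral>\<^sup>+x. indicator {0..} (x - \<alpha> * t) *
         (indicator {0..} (y - x + \<kappa> * (t - s)) * indicator {0..} (x + \<kappa> * (t - s) - y)) \<partial>lborel)"
        unfolding G_def by (subst nn_integral_cmult[symmetric]) (measurable, simp add: mult_ac)
      show "indicator {0..t} s * ennreal ((\<kappa> - \<alpha>) * (t - s)) * (indicator {0..} (y - \<alpha> * s) * m (s, y)) \<le> (\<integral>\<^sup>+x. G x s y \<partial>lborel)"
      proof (cases "s \<in> {0..t} \<and> 0 \<le> y - \<alpha> * s")
        case True
        then show ?thesis unfolding eqx using length_bound[OF \<alpha>, of s t y] True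
          by (simp add: indicator_def mult_ac mult_left_mono)
      next
        case False
        then show ?thesis by (auto simp: indicator_def)
      qed
    qed
    have C4: "(\<integral>\<^sup>+s. \<integral>\<^sup>+y. indicator {0..t} s * ennreal ((\<kappa> - \<alpha>) * (t - s)) * (indicator {0..} (y - \<alpha> * s) * m (s, y)) \<partial>lborel \<partial>lborel)
       = (\<integral>\<^sup>+s. indicator {0..t} s * ennreal ((\<kappa> - \<alpha>) * (t - s)) * B s \<partial>lborel)"
    proof (rule nn_integral_cong)
      fix s
      have my: "(\<lambda>y. indicator {0..} (y - \<alpha> * s) * m (s, y)) \<in> borel_measurable lborel" by measurable
      show "(\<integral>\<^sup>+y. indicator {0..t} s * ennreal ((\<kappa> - \<alpha>) * (t - s)) * (indicator {0..} (y - \<alpha> * s) * m (s, y)) \<partial>lborel)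
         = indicator {0..t} s * ennreal ((\<kappa> - \<alpha>) * (t - s)) * B s"
        unfolding B_def using nn_integral_cmult[OF my, of "indicator {0..t} s * ennreal ((\<kappa> - \<alpha>) * (t - s))"] by simp
    qed
    have "ennreal a * (\<integral>\<^sup>+s. indicator {0..t} s * ennreal ((\<kappa> - \<alpha>) * (t - s)) * B s \<partial>lborel)
       \<le> ennreal a * (\<integral>\<^sup>+x. \<integral>\<^sup>+s. \<integral>\<^sup>+y. G x s y \<partial>lborel \<partial>lborel \<partial>lborel)"
      unfolding C2 C4[symmetric] using C3 by (rule mult_left_mono) simp
    then show ?thesis using C1 by (rule order.trans)
  qed
  have "ennreal b * H = (\<integral>\<^sup>+t. indicator {0..} t * ennreal (exp (- \<beta> * t)) * (ennreal b * B t) \<partial>lborel)"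
    unfolding H_def by (subst nn_integral_cmult[symmetric]) (measurable, simp add: mult_ac)
  also have "\<dots> \<ge> (\<integral>\<^sup>+t. indicator {0..} t * ennreal (exp (- \<beta> * t)) *
      (ennreal a * (\<integral>\<^sup>+s. indicator {0..t} s * ennreal ((\<kappa> - \<alpha>) * (t - s)) * B s \<partial>lborel)) \<partial>lborel)"
  proof (rule nn_integral_mono)
    fix t
    show "indicator {0..} t * ennreal (exp (- \<beta> * t)) * (ennreal a * (\<integral>\<^sup>+s. indicator {0..t} s * ennreal ((\<kappa> - \<alpha>) * (t - s)) * B s \<partial>lborel))
      \<le> indicator {0..} t * ennreal (exp (- \<beta> * t)) * (ennreal b * B t)"
      by (cases "0 \<le> t") (auto intro!: mult_left_mono S2)
  qed
  also have "(\<integral>\<^sup>+t. indicator {0..} t * ennreal (exp (- \<beta> * t)) *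
      (ennreal a * (\<integral>\<^sup>+s. indicator {0..t} s * ennreal ((\<kappa> - \<alpha>) * (t - s)) * B s \<partial>lborel)) \<partial>lborel)
    = ennreal a * (\<integral>\<^sup>+t. \<integral>\<^sup>+s. indicator {0..} t * ennreal (exp (- \<beta> * t)) * (indicator {0..t} s * ennreal ((\<kappa> - \<alpha>) * (t - s)) * B s) \<partial>lborel \<partial>lborel)"
  proof -
    have "indicator {0..} t * ennreal (exp (- \<beta> * t)) * (ennreal a * (\<integral>\<^sup>+s. indicator {0..t} s * ennreal ((\<kappa> - \<alpha>) * (t - s)) * B s \<partial>lborel))
      = ennreal a * (\<integral>\<^sup>+s. indicator {0..} t * ennreal (exp (- \<beta> * t)) * (indicator {0..t} s * ennreal ((\<kappa> - \<alpha>) * (t - s)) * B s) \<partial>lborel)" for t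
    proof -
      have mf: "(\<lambda>s. indicator {0..t} s * ennreal ((\<kappa> - \<alpha>) * (t - s)) * B s) \<in> borel_measurable lborel" by measurable
      have eq: "(\<integral>\<^sup>+s. indicator {0..} t * ennreal (exp (- \<beta> * t)) * (indicator {0..t} s * ennreal ((\<kappa> - \<alpha>) * (t - s)) * B s) \<partial>lborel)
        = indicator {0..} t * ennreal (exp (- \<beta> * t)) * (\<integral>\<^sup>+s. indicator {0..t} s * ennreal ((\<kappa> - \<alpha>) * (t - s)) * B s \<partial>lborel)"
        by (rule nn_integral_cmult[OF mf])
      show ?thesis unfolding eq by (rule mult.left_commute)
    qed
    moreover have "(\<lambda>t. \<integral>\<^sup>+s. indicator {0..} t * ennreal (exp (- \<beta> * t)) * (indicator {0..t} s * ennreal ((\<kappa> - \<alpha>) * (t - s)) * B s) \<partial>lborel)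
       \<in> borel_measurable lborel"
    proof -
      have e: "(\<lambda>p. indicator {0..} (fst p) * ennreal (exp (- \<beta> * fst p)) * (indicator {0..fst p} (snd p) * ennreal ((\<kappa> - \<alpha>) * (fst p - snd p)) * B (snd p)))
        = (\<lambda>p. indicator {0..} (fst p) * ennreal (exp (- \<beta> * fst p)) * (indicator {0..} (snd p) * indicator {0..} (fst p - snd p) *
            ennreal ((\<kappa> - \<alpha>) * (fst p - snd p)) * B (snd p)) :: ennreal)"
        by (auto simp: fun_eq_iff indicator_def)
      have "(\<lambda>p. indicator {0..} (fst p) * ennreal (exp (- \<beta> * fst p)) * (indicator {0..} (snd p) * indicator {0..} (fst p - snd p) *
            ennreal ((\<kappa> - \<alpha>) * (fst p - snd p)) * B (snd p)) :: ennreal) \<in> borel_measurable (lborel \<Otimes>\<^sub>M lborel)" by measurable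
      then have "(\<lambda>p. indicator {0..} (fst p) * ennreal (exp (- \<beta> * fst p)) * (indicator {0..fst p} (snd p) * ennreal ((\<kappa> - \<alpha>) * (fst p - snd p)) * B (snd p)))
         \<in> borel_measurable (lborel \<Otimes>\<^sub>M lborel)" unfolding e .
      from lborel.borel_measurable_nn_integral_fst[OF this] show ?thesis by simp
    qed
    ultimately show ?thesis by (simp add: nn_integral_cmult)
  qed
  also have "(\<integral>\<^sup>+t. \<integral>\<^sup>+s. indicator {0..} t * ennreal (exp (- \<beta> * t)) * (indicator {0..t} s * ennreal ((\<kappa> - \<alpha>) * (t - s)) * B s) \<partial>lborel \<partial>lborel)
    = (\<integral>\<^sup>+s. \<integral>\<^sup>+t. indicator {0..} t * ennreal (exp (- \<beta> * t)) * (indicator {0..t} s * ennreal ((\<kappa> - \<alpha>) * (t - s)) * B s) \<partial>lborel \<partial>lborel)"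
  proof -
    have "(\<lambda>(t, s). indicator {0..} t * ennreal (exp (- \<beta> * t)) * (indicator {0..t} s * ennreal ((\<kappa> - \<alpha>) * (t - s)) * B s))
       \<in> borel_measurable (lborel \<Otimes>\<^sub>M lborel)"
    proof -
      have e: "(\<lambda>(t, s). indicator {0..} t * ennreal (exp (- \<beta> * t)) * (indicator {0..t} s * ennreal ((\<kappa> - \<alpha>) * (t - s)) * B s))
        = (\<lambda>p. indicator {0..} (fst p) * ennreal (exp (- \<beta> * fst p)) * (indicator {0..} (snd p) * indicator {0..} (fst p - snd p) *
            ennreal ((\<kappa> - \<alpha>) * (fst p - snd p)) * B (snd p)) :: ennreal)"
        by (auto simp: fun_eq_iff indicator_def)
      show ?thesis unfolding e by measurable
    qed
    then show ?thesis by (rule lborel_pair.Fubini'[symmetric])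
  qed
  also have "\<dots> = (\<integral>\<^sup>+s. indicator {0..} s * B s * ennreal (\<kappa> - \<alpha>) * ennreal (exp (- \<beta> * s) / \<beta>\<^sup>2) \<partial>lborel)"
  proof (rule nn_integral_cong)
    fix s
    have "(\<integral>\<^sup>+t. indicator {0..} t * ennreal (exp (- \<beta> * t)) * (indicator {0..t} s * ennreal ((\<kappa> - \<alpha>) * (t - s)) * B s) \<partial>lborel)
      = (\<integral>\<^sup>+t. (indicator {0..} s * B s * ennreal (\<kappa> - \<alpha>)) * (indicator {s..} t * ennreal (exp (- \<beta> * t) * (t - s))) \<partial>lborel)"
    proof (rule nn_integral_cong)
      fix t
      show "indicator {0..} t * ennreal (exp (- \<beta> * t)) * (indicator {0..t} s * ennreal ((\<kappa> - \<alpha>) * (t - s)) * B s)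
        = (indicator {0..} s * B s * ennreal (\<kappa> - \<alpha>)) * (indicator {s..} t * ennreal (exp (- \<beta> * t) * (t - s)))"
      proof (cases "0 \<le> s \<and> s \<le> t")
        case True
        then show ?thesis using \<alpha> by (simp add: indicator_def ennreal_mult mult_ac)
      next
        case False
        then show ?thesis by (auto simp: indicator_def)
      qed
    qed
    also have "\<dots> = (indicator {0..} s * B s * ennreal (\<kappa> - \<alpha>)) * ennreal (exp (- \<beta> * s) / \<beta>\<^sup>2)"
    proof -
      have mt: "(\<lambda>t. indicator {s..} t * ennreal (exp (- \<beta> * t) * (t - s))) \<in> borel_measurable lborel" by measurable
      show ?thesis by (simp only: nn_integral_cmult[OF mt] laplace_shift[OF \<beta>])
    qed
    finally show "(\<integral>\<^sup>+t. indicator {0..} t * ennreal (exp (- \<beta> * t)) * (indicator {0..t} s * ennreal ((\<kappa> - \<alpha>) * (t - s)) * B s) \<partial>lborel)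
      = indicator {0..} s * B s * ennreal (\<kappa> - \<alpha>) * ennreal (exp (- \<beta> * s) / \<beta>\<^sup>2)" .
  qed
  also have "\<dots> = ennreal ((\<kappa> - \<alpha>) / \<beta>\<^sup>2) * H"
  proof -
    have "indicator {0..} s * B s * ennreal (\<kappa> - \<alpha>) * ennreal (exp (- \<beta> * s) / \<beta>\<^sup>2) =
      ennreal ((\<kappa> - \<alpha>) / \<beta>\<^sup>2) * (indicator {0..} s * ennreal (exp (- \<beta> * s)) * B s)" for s
    proof -
      have r: "(\<kappa> - \<alpha>) * (exp (- \<beta> * s) / \<beta>\<^sup>2) = ((\<kappa> - \<alpha>) / \<beta>\<^sup>2) * exp (- \<beta> * s)" by simp
      have "ennreal (\<kappa> - \<alpha>) * ennreal (exp (- \<beta> * s) / \<beta>\<^sup>2) = ennreal ((\<kappa> - \<alpha>) * (exp (- \<beta> * s) / \<beta>\<^sup>2))"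
        using \<alpha> by (intro ennreal_mult[symmetric]) auto
      also have "\<dots> = ennreal ((\<kappa> - \<alpha>) / \<beta>\<^sup>2) * ennreal (exp (- \<beta> * s))"
        unfolding r using \<alpha> by (intro ennreal_mult) auto
      finally have q: "ennreal (\<kappa> - \<alpha>) * ennreal (exp (- \<beta> * s) / \<beta>\<^sup>2) = ennreal ((\<kappa> - \<alpha>) / \<beta>\<^sup>2) * ennreal (exp (- \<beta> * s))" .
      have "indicator {0..} s * B s * ennreal (\<kappa> - \<alpha>) * ennreal (exp (- \<beta> * s) / \<beta>\<^sup>2) =
        indicator {0..} s * B s * (ennreal (\<kappa> - \<alpha>) * ennreal (exp (- \<beta> * s) / \<beta>\<^sup>2))" by (simp only: mult.assoc)
      also have "\<dots> = indicator {0..} s * B s * (ennreal ((\<kappa> - \<alpha>) / \<beta>\<^sup>2) * ennreal (exp (- \<beta> * s)))" by (simp only: q)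
      also have "\<dots> = ennreal ((\<kappa> - \<alpha>) / \<beta>\<^sup>2) * (indicator {0..} s * ennreal (exp (- \<beta> * s)) * B s)"
        by (simp only: ac_simps)
      finally show ?thesis .
    qed
    then show ?thesis unfolding H_def by (simp add: nn_integral_cmult)
  qed
  finally have key: "ennreal a * (ennreal ((\<kappa> - \<alpha>) / \<beta>\<^sup>2) * H) \<le> ennreal b * H" .
  show ?thesis
  proof (rule ccontr)
    assume "(\<integral>\<^sup>+t. indicator {0..} t * ennreal (exp (- \<beta> * t)) * (\<integral>\<^sup>+x. indicator {0..} (x - \<alpha> * t) * m (t, x) \<partial>lborel) \<partial>lborel) \<noteq> \<infinity>"
    then have Hf: "H \<noteq> \<infinity>" by (simp add: H_def B_def)
    have H0: "H \<noteq> 0" using pos by (simp add: H_def B_def)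
    obtain h where h: "H = ennreal h" "0 \<le> h" using Hf by (cases H) auto
    have hp: "0 < h" using H0 h by (cases "h = 0") auto
    have "ennreal (a * ((\<kappa> - \<alpha>) / \<beta>\<^sup>2) * h) \<le> ennreal (b * h)"
      using key h a \<alpha> b by (simp add: ennreal_mult[symmetric] mult.assoc)
    then have "a * ((\<kappa> - \<alpha>) / \<beta>\<^sup>2) * h \<le> b * h" using b h by (simp add: ennreal_le_iff)
    then have "a * ((\<kappa> - \<alpha>) / \<beta>\<^sup>2) \<le> b" using hp by (rule mult_right_le_imp_le)
    then have "a * (\<kappa> - \<alpha>) \<le> b * \<beta>\<^sup>2" using \<beta> by (simp add: field_simps)
    then show False using ab by simp
  qed
qed

context bsheet begin

lemma pred_meas:
  assumes "predictable_field M F u"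
  shows "(\<lambda>p. if 0 \<le> fst (fst p) then u (fst (fst p)) (snd (fst p)) (snd p) else 0)
     \<in> borel_measurable ((lborel \<Otimes>\<^sub>M lborel) \<Otimes>\<^sub>M M)"
proof -
  define P :: "((real \<times> real) \<times> 'a) measure" where "P = (lborel \<Otimes>\<^sub>M lborel) \<Otimes>\<^sub>M M"
  define \<Omega>r where "\<Omega>r = {p :: (real \<times> real) \<times> 'a. 0 \<le> fst (fst p)}"
  define \<phi> where "\<phi> p = (fst (fst p), snd (fst p), snd p)" for p :: "(real \<times> real) \<times> 'a"
  define \<Omega> where "\<Omega> = {0::real..} \<times> (UNIV :: real set) \<times> space M"
  define Gen :: "(real \<times> real \<times> 'a) set set" where "Gen = ({{a<..b} \<times> A \<times> G | a b A G. 0 \<le> a \<and> a \<le> b \<and> A \<in> sets borel \<and> G \<in> sets (F a)} \<union>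
      {{0} \<times> A \<times> G | A G. A \<in> sets borel \<and> G \<in> sets (F 0)})"
  have PS: "predictable_sigma M F = measure_of \<Omega> Gen (\<lambda>_. 0)"
    unfolding predictable_sigma_def \<Omega>_def Gen_def ..
  have \<Omega>rm: "\<Omega>r \<inter> space P \<in> sets P"
  proof -
    have "\<Omega>r \<inter> space P = {p \<in> space P. 0 \<le> fst (fst p)}" by (auto simp: \<Omega>r_def)
    also have "\<dots> \<in> sets P" unfolding P_def by measurable
    finally show ?thesis .
  qed
  have spP: "space P = UNIV \<times> space M" by (simp add: P_def space_pair_measure)
  have Gsub: "G \<in> sets (F a) \<Longrightarrow> G \<subseteq> space M" for G a
    using sets.sets_into_space[of G "F a"] by simp
  have GM: "G \<in> sets (F a) \<Longrightarrow> G \<in> sets M" for G a using sets_F_M by blast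
  have "\<phi> \<in> restrict_space P \<Omega>r \<rightarrow>\<^sub>M measure_of \<Omega> Gen (\<lambda>_. 0)"
  proof (rule measurable_measure_of)
    show "Gen \<subseteq> Pow \<Omega>"
      unfolding Gen_def \<Omega>_def using Gsub by fastforce
    show "\<phi> \<in> space (restrict_space P \<Omega>r) \<rightarrow> \<Omega>"
      by (auto simp: space_restrict_space spP \<Omega>_def \<phi>_def \<Omega>r_def)
    fix Y assume "Y \<in> Gen"
    then consider (I) a b A G where "Y = {a<..b} \<times> A \<times> G" "0 \<le> a" "a \<le> b" "A \<in> sets borel" "G \<in> sets (F a)"
      | (Z) A G where "Y = {0} \<times> A \<times> G" "A \<in> sets borel" "G \<in> sets (F 0)"
      unfolding Gen_def by blast
    then show "\<phi> -` Y \<inter> space (restrict_space P \<Omega>r) \<in> sets (restrict_space P \<Omega>r)"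
    proof cases
      case I
      have eq: "\<phi> -` Y \<inter> space (restrict_space P \<Omega>r) = ({a<..b} \<times> A) \<times> G"
        using I Gsub[OF I(5)] by (auto simp: space_restrict_space spP \<phi>_def \<Omega>r_def)
      have "({a<..b} \<times> A) \<times> G \<in> sets P" unfolding P_def using I GM by (intro pair_measureI) auto
      moreover have "({a<..b} \<times> A) \<times> G \<subseteq> \<Omega>r" using I by (auto simp: \<Omega>r_def)
      ultimately show ?thesis unfolding eq using sets_restrict_space_iff[OF \<Omega>rm] by blast
    next
      case Z
      have eq: "\<phi> -` Y \<inter> space (restrict_space P \<Omega>r) = ({0} \<times> A) \<times> G"
        using Z Gsub[OF Z(3)] by (auto simp: space_restrict_space spP \<phi>_def \<Omega>r_def)
      have "({0} \<times> A) \<times> G \<in> sets P" unfolding P_def using Z GM by (intro pair_measureI) auto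
      moreover have "({0} \<times> A) \<times> G \<subseteq> \<Omega>r" using Z by (auto simp: \<Omega>r_def)
      ultimately show ?thesis unfolding eq using sets_restrict_space_iff[OF \<Omega>rm] by blast
    qed
  qed
  then have "\<phi> \<in> restrict_space P \<Omega>r \<rightarrow>\<^sub>M predictable_sigma M F" unfolding PS .
  moreover have "(\<lambda>(t, x, \<omega>). u t x \<omega>) \<in> borel_measurable (predictable_sigma M F)"
    using assms unfolding predictable_field_def .
  ultimately have "(\<lambda>(t, x, \<omega>). u t x \<omega>) \<circ> \<phi> \<in> borel_measurable (restrict_space P \<Omega>r)"
    by (rule measurable_comp)
  then have "(\<lambda>p. u (fst (fst p)) (snd (fst p)) (snd p)) \<in> borel_measurable (restrict_space P \<Omega>r)"
    by (simp add: \<phi>_def comp_def)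
  then have "(\<lambda>p. if p \<in> \<Omega>r then u (fst (fst p)) (snd (fst p)) (snd p) else 0) \<in> borel_measurable P"
    using measurable_restrict_space_iff[OF \<Omega>rm, of 0 borel "\<lambda>p. u (fst (fst p)) (snd (fst p)) (snd p)"] by simp
  then show ?thesis by (simp add: P_def \<Omega>r_def)
qed

end

lemma wG: "wave_Gamma \<kappa> (t - s) (y - x) = 1/2 * (indicator {0..} (y - x + \<kappa> * (t - s)) * indicator {0..} (x + \<kappa> * (t - s) - y))"
  by (auto simp: wave_Gamma_def indicator_def)

locale wsetup = bsheet M F W for M :: "'a measure" and F W +
  fixes \<kappa> :: real and \<sigma> u0 v0 :: "real \<Rightarrow> real" and u :: "real \<Rightarrow> real \<Rightarrow> 'a \<Rightarrow> real" and L :: real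
  assumes ms: "mild_solution M F W \<kappa> \<sigma> u0 v0 u"
    and \<sigma>m[measurable]: "\<sigma> \<in> borel_measurable borel"
    and \<sigma>L: "\<And>x. L\<^sup>2 * x\<^sup>2 \<le> (\<sigma> x)\<^sup>2"
begin

definition ut where "ut s y \<omega> = (if 0 \<le> s then u s y \<omega> else 0)"

definition Iv where "Iv t x = (u0 (x + \<kappa> * t) + u0 (x - \<kappa> * t)) / 2 + 1 / (2 * \<kappa>) * (LINT y:{x - \<kappa> * t .. x + \<kappa> * t}|lborel. v0 y)"

definition mm where "mm z = (\<integral>\<^sup>+\<omega>. ennreal ((ut (fst z) (snd z) \<omega>)\<^sup>2) \<partial>M)"

definition K where "K t x = (\<integral>\<^sup>+s. \<integral>\<^sup>+y. indicator {0..t} s * indicator {0..} (y - x + \<kappa> * (t - s)) *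
         indicator {0..} (x + \<kappa> * (t - s) - y) * mm (s, y) \<partial>lborel \<partial>lborel)"

lemma ut_meas1[measurable]: "(\<lambda>p. ut (fst (fst p)) (snd (fst p)) (snd p)) \<in> borel_measurable ((lborel \<Otimes>\<^sub>M lborel) \<Otimes>\<^sub>M M)"
  unfolding ut_def using pred_meas ms unfolding mild_solution_def by blast

lemma ut_meas2[measurable]: "(\<lambda>p. ut (fst (snd p)) (snd (snd p)) (fst p)) \<in> borel_measurable (M \<Otimes>\<^sub>M (lborel \<Otimes>\<^sub>M lborel))"
proof -
  have "(\<lambda>(x, y). (\<lambda>p. ut (fst (fst p)) (snd (fst p)) (snd p)) (y, x)) \<in> borel_measurable (M \<Otimes>\<^sub>M (lborel \<Otimes>\<^sub>M lborel))"
    using measurable_pair_swap_iff[THEN iffD1, OF ut_meas1] .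
  then show ?thesis by (simp add: split_beta')
qed

lemma sfM: "sigma_finite_measure M" by unfold_locales

lemma mm_meas[measurable]: "mm \<in> borel_measurable (lborel \<Otimes>\<^sub>M lborel)"
proof -
  have "(\<lambda>p. ennreal ((ut (fst (fst p)) (snd (fst p)) (snd p))\<^sup>2)) \<in> borel_measurable ((lborel \<Otimes>\<^sub>M lborel) \<Otimes>\<^sub>M M)"
    by measurable
  from sigma_finite_measure.borel_measurable_nn_integral_fst[OF sfM this]
  show ?thesis unfolding mm_def[abs_def] by simp
qed

lemma key_ineq:
  assumes t: "0 \<le> t"
  shows "ennreal ((Iv t x)\<^sup>2) \<le> mm (t, x)"
    "\<And>\<epsilon>. 0 < \<epsilon> \<Longrightarrow> ennreal (L\<^sup>2 / 4) * K t x \<le> ennreal ((1 + \<epsilon>)\<^sup>2) * mm (t, x)"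
proof -
  define f where "f = (\<lambda>s y \<omega>. indicator {0..t} s * wave_Gamma \<kappa> (t - s) (y - x) * \<sigma> (u s y \<omega>))"
  obtain J where HW: "has_walsh_integral M F W f J"
    and AEu: "AE \<omega> in M. u t x \<omega> = Iv t x + J \<omega>"
    using ms t unfolding mild_solution_def f_def Iv_def by blast
  have feq: "f s y \<omega> = indicator {0..t} s * (1/2 * (indicator {0..} (y - x + \<kappa> * (t - s)) * indicator {0..} (x + \<kappa> * (t - s) - y))) * \<sigma> (ut s y \<omega>)" for s y \<omega>
    unfolding f_def wG by (auto simp: ut_def indicator_def)
  have fm: "(\<lambda>(\<omega>, z). f (fst z) (snd z) \<omega>) \<in> borel_measurable (M \<Otimes>\<^sub>M (lborel \<Otimes>\<^sub>M lborel))"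
  proof -
    have "(\<lambda>p. indicator {0..t} (fst (snd p)) * (1/2 * (indicator {0..} (snd (snd p) - x + \<kappa> * (t - fst (snd p))) *
       indicator {0..} (x + \<kappa> * (t - fst (snd p)) - snd (snd p)))) * \<sigma> (ut (fst (snd p)) (snd (snd p)) (fst p)) :: real)
       \<in> borel_measurable (M \<Otimes>\<^sub>M (lborel \<Otimes>\<^sub>M lborel))" by measurable
    then show ?thesis by (simp add: split_beta' feq)
  qed
  note WP = walsh_props[OF HW fm]
  define I where "I = Iv t x"
  have mmeq: "mm (t, x) = ennreal (I\<^sup>2 + expectation (\<lambda>\<omega>. (J \<omega>)\<^sup>2))"
  proof -
    have "mm (t, x) = (\<integral>\<^sup>+\<omega>. ennreal ((u t x \<omega>)\<^sup>2) \<partial>M)" using t by (simp add: mm_def ut_def)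
    also have "\<dots> = (\<integral>\<^sup>+\<omega>. ennreal ((I + J \<omega>)\<^sup>2) \<partial>M)"
      by (rule nn_integral_cong_AE) (use AEu in \<open>auto simp: I_def\<close>)
    also have "\<dots> = ennreal (expectation (\<lambda>\<omega>. (I + J \<omega>)\<^sup>2))"
    proof (rule nn_integral_eq_integral)
      show "integrable M (\<lambda>\<omega>. (I + J \<omega>)\<^sup>2)"
        using sq_integrable_add[of "\<lambda>_. I" J] WP by simp
    qed simp
    also have "expectation (\<lambda>\<omega>. (I + J \<omega>)\<^sup>2) = I\<^sup>2 + expectation (\<lambda>\<omega>. (J \<omega>)\<^sup>2)"
    proof -
      have e: "(\<lambda>\<omega>. (I + J \<omega>)\<^sup>2) = (\<lambda>\<omega>. I\<^sup>2 + (2 * I * J \<omega> + (J \<omega>)\<^sup>2))"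
        by (simp add: fun_eq_iff power2_eq_square algebra_simps)
      have "expectation (\<lambda>\<omega>. I\<^sup>2 + (2 * I * J \<omega> + (J \<omega>)\<^sup>2)) = I\<^sup>2 + (2 * I * expectation J + expectation (\<lambda>\<omega>. (J \<omega>)\<^sup>2))"
        using WP by (simp add: prob_space)
      then show ?thesis unfolding e using WP by simp
    qed
    finally show ?thesis .
  qed
  have EJ2: "0 \<le> expectation (\<lambda>\<omega>. (J \<omega>)\<^sup>2)" by simp
  show "ennreal ((Iv t x)\<^sup>2) \<le> mm (t, x)" unfolding mmeq I_def using EJ2 by (intro ennreal_leI) simp
  fix \<epsilon> :: real assume \<epsilon>: "0 < \<epsilon>"
  have IJ: "(\<integral>\<^sup>+\<omega>. ennreal ((J \<omega>)\<^sup>2) \<partial>M) \<le> mm (t, x)"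
  proof -
    have "(\<integral>\<^sup>+\<omega>. ennreal ((J \<omega>)\<^sup>2) \<partial>M) = ennreal (expectation (\<lambda>\<omega>. (J \<omega>)\<^sup>2))"
      using WP by (intro nn_integral_eq_integral) auto
    also have "\<dots> \<le> mm (t, x)" unfolding mmeq by (intro ennreal_leI) simp
    finally show ?thesis .
  qed
  have up: "(\<integral>\<^sup>+\<omega>. (\<integral>\<^sup>+z. ennreal ((f (fst z) (snd z) \<omega>)\<^sup>2) \<partial>(lborel \<Otimes>\<^sub>M lborel)) \<partial>M) \<le> ennreal ((1 + \<epsilon>)\<^sup>2) * mm (t, x)"
    using WP(5)[OF \<epsilon>] IJ by (meson mult_left_mono order.trans zero_le)
  define g where "g = (\<lambda>z \<omega>. indicator {0..t} (fst z) * indicator {0..} (snd z - x + \<kappa> * (t - fst z)) *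
         indicator {0..} (x + \<kappa> * (t - fst z) - snd z) * ennreal ((ut (fst z) (snd z) \<omega>)\<^sup>2) :: ennreal)"
  have gm1: "(\<lambda>p. g (fst p) (snd p)) \<in> borel_measurable ((lborel \<Otimes>\<^sub>M lborel) \<Otimes>\<^sub>M M)"
    unfolding g_def by measurable
  have gm2: "(\<lambda>p. g (snd p) (fst p)) \<in> borel_measurable (M \<Otimes>\<^sub>M (lborel \<Otimes>\<^sub>M lborel))"
    unfolding g_def by measurable
  have K1: "K t x = (\<integral>\<^sup>+z. \<integral>\<^sup>+\<omega>. g z \<omega> \<partial>M \<partial>(lborel \<Otimes>\<^sub>M lborel))"
  proof -
    have h: "(\<lambda>z. indicator {0..t} (fst z) * indicator {0..} (snd z - x + \<kappa> * (t - fst z)) *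
         indicator {0..} (x + \<kappa> * (t - fst z) - snd z) * mm z :: ennreal) \<in> borel_measurable (lborel \<Otimes>\<^sub>M lborel)"
      by measurable
    have "K t x = (\<integral>\<^sup>+z. indicator {0..t} (fst z) * indicator {0..} (snd z - x + \<kappa> * (t - fst z)) *
         indicator {0..} (x + \<kappa> * (t - fst z) - snd z) * mm z \<partial>(lborel \<Otimes>\<^sub>M lborel))"
      unfolding K_def using lborel.nn_integral_fst[OF h] by simp
    also have "\<dots> = (\<integral>\<^sup>+z. \<integral>\<^sup>+\<omega>. g z \<omega> \<partial>M \<partial>(lborel \<Otimes>\<^sub>M lborel))"
    proof (rule nn_integral_cong)
      fix z :: "real \<times> real"
      have [measurable]: "ut (fst z) (snd z) \<in> borel_measurable M"
        using measurable_Pair2[OF ut_meas1, of z] by (simp add: space_pair_measure)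
      have mw: "(\<lambda>\<omega>. ennreal ((ut (fst z) (snd z) \<omega>)\<^sup>2)) \<in> borel_measurable M"
        by measurable
      show "indicator {0..t} (fst z) * indicator {0..} (snd z - x + \<kappa> * (t - fst z)) *
         indicator {0..} (x + \<kappa> * (t - fst z) - snd z) * mm z = (\<integral>\<^sup>+\<omega>. g z \<omega> \<partial>M)"
        unfolding g_def mm_def by (subst nn_integral_cmult[OF mw]) simp
    qed
    finally show ?thesis .
  qed
  have K2: "(\<integral>\<^sup>+z. \<integral>\<^sup>+\<omega>. g z \<omega> \<partial>M \<partial>(lborel \<Otimes>\<^sub>M lborel)) = (\<integral>\<^sup>+\<omega>. \<integral>\<^sup>+z. g z \<omega> \<partial>(lborel \<Otimes>\<^sub>M lborel) \<partial>M)"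
  proof -
    interpret pair_sigma_finite M "lborel \<Otimes>\<^sub>M lborel"
      by (simp add: pair_sigma_finite_def sfM lborel_pair.P.sigma_finite_measure_axioms)
    have "(\<lambda>(\<omega>, z). g z \<omega>) \<in> borel_measurable (M \<Otimes>\<^sub>M (lborel \<Otimes>\<^sub>M lborel))"
      using gm2 by (simp add: split_beta')
    from Fubini'[OF this] show ?thesis .
  qed
  have low: "ennreal (L\<^sup>2 / 4) * (\<integral>\<^sup>+\<omega>. \<integral>\<^sup>+z. g z \<omega> \<partial>(lborel \<Otimes>\<^sub>M lborel) \<partial>M)
     \<le> (\<integral>\<^sup>+\<omega>. (\<integral>\<^sup>+z. ennreal ((f (fst z) (snd z) \<omega>)\<^sup>2) \<partial>(lborel \<Otimes>\<^sub>M lborel)) \<partial>M)"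
  proof -
    have om: "(\<lambda>\<omega>. \<integral>\<^sup>+z. g z \<omega> \<partial>(lborel \<Otimes>\<^sub>M lborel)) \<in> borel_measurable M"
      using lborel_pair.P.borel_measurable_nn_integral_fst[OF gm2] by simp
    have "ennreal (L\<^sup>2 / 4) * (\<integral>\<^sup>+\<omega>. \<integral>\<^sup>+z. g z \<omega> \<partial>(lborel \<Otimes>\<^sub>M lborel) \<partial>M)
       = (\<integral>\<^sup>+\<omega>. ennreal (L\<^sup>2 / 4) * (\<integral>\<^sup>+z. g z \<omega> \<partial>(lborel \<Otimes>\<^sub>M lborel)) \<partial>M)"
      by (rule nn_integral_cmult[OF om, symmetric])
    also have "\<dots> \<le> (\<integral>\<^sup>+\<omega>. (\<integral>\<^sup>+z. ennreal ((f (fst z) (snd z) \<omega>)\<^sup>2) \<partial>(lborel \<Otimes>\<^sub>M lborel)) \<partial>M)"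
    proof (rule nn_integral_mono)
      fix \<omega> assume w: "\<omega> \<in> space M"
      have zm: "(\<lambda>z. g z \<omega>) \<in> borel_measurable (lborel \<Otimes>\<^sub>M lborel)"
        using measurable_Pair2[OF gm2 w] by simp
      have "ennreal (L\<^sup>2 / 4) * (\<integral>\<^sup>+z. g z \<omega> \<partial>(lborel \<Otimes>\<^sub>M lborel)) = (\<integral>\<^sup>+z. ennreal (L\<^sup>2 / 4) * g z \<omega> \<partial>(lborel \<Otimes>\<^sub>M lborel))"
        by (rule nn_integral_cmult[OF zm, symmetric])
      also have "\<dots> \<le> (\<integral>\<^sup>+z. ennreal ((f (fst z) (snd z) \<omega>)\<^sup>2) \<partial>(lborel \<Otimes>\<^sub>M lborel))"
      proof (rule nn_integral_mono)
        fix z :: "real \<times> real"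
        show "ennreal (L\<^sup>2 / 4) * g z \<omega> \<le> ennreal ((f (fst z) (snd z) \<omega>)\<^sup>2)"
        proof (cases "fst z \<in> {0..t} \<and> 0 \<le> snd z - x + \<kappa> * (t - fst z) \<and> 0 \<le> x + \<kappa> * (t - fst z) - snd z")
          case True
          have fz: "f (fst z) (snd z) \<omega> = 1/2 * \<sigma> (ut (fst z) (snd z) \<omega>)"
            using True by (simp add: feq indicator_def)
          have "L\<^sup>2 / 4 * (ut (fst z) (snd z) \<omega>)\<^sup>2 \<le> (f (fst z) (snd z) \<omega>)\<^sup>2"
            unfolding fz using \<sigma>L[of "ut (fst z) (snd z) \<omega>"] by (simp add: power_mult_distrib power2_eq_square field_simps)
          then have le: "ennreal (L\<^sup>2 / 4 * (ut (fst z) (snd z) \<omega>)\<^sup>2) \<le> ennreal ((f (fst z) (snd z) \<omega>)\<^sup>2)"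
            by (rule ennreal_leI)
          have B: "ennreal (L\<^sup>2 / 4 * (ut (fst z) (snd z) \<omega>)\<^sup>2) = ennreal (L\<^sup>2 / 4) * ennreal ((ut (fst z) (snd z) \<omega>)\<^sup>2)"
            by (intro ennreal_mult) auto
          have C: "g z \<omega> = ennreal ((ut (fst z) (snd z) \<omega>)\<^sup>2)" using True by (simp add: g_def indicator_def)
          show ?thesis unfolding C B[symmetric] using le .
        next
          case False
          then have "g z \<omega> = 0" by (auto simp: g_def indicator_def)
          then show ?thesis by simp
        qed
      qed
      finally show "ennreal (L\<^sup>2 / 4) * (\<integral>\<^sup>+z. g z \<omega> \<partial>(lborel \<Otimes>\<^sub>M lborel)) \<le> (\<integral>\<^sup>+z. ennreal ((f (fst z) (snd z) \<omega>)\<^sup>2) \<partial>(lborel \<Otimes>\<^sub>M lborel))" .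
    qed
    finally show ?thesis .
  qed
  show "ennreal (L\<^sup>2 / 4) * K t x \<le> ennreal ((1 + \<epsilon>)\<^sup>2) * mm (t, x)"
    unfolding K1 K2 using low up by (rule order.trans)
qed

end

lemma sigma_lower:
  assumes "L_sigma \<sigma> > 0" "\<sigma> 0 = 0"
  shows "(L_sigma \<sigma>)\<^sup>2 * x\<^sup>2 \<le> (\<sigma> x)\<^sup>2"
proof (cases "x = 0")
  case True
  then show ?thesis using assms by simp
next
  case False
  define L where "L = L_sigma \<sigma>"
  have bdd: "bdd_below ((\<lambda>x. \<bar>\<sigma> x / x\<bar>) ` (- {0}))" by (rule bdd_belowI[of _ 0]) auto
  have "L \<le> \<bar>\<sigma> x / x\<bar>" unfolding L_def L_sigma_def using False by (intro cINF_lower[OF bdd]) auto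
  then have "L * \<bar>x\<bar> \<le> \<bar>\<sigma> x / x\<bar> * \<bar>x\<bar>" by (intro mult_right_mono) auto
  also have "\<bar>\<sigma> x / x\<bar> * \<bar>x\<bar> = \<bar>\<sigma> x\<bar>" using False by (simp add: abs_divide)
  finally have h: "L * \<bar>x\<bar> \<le> \<bar>\<sigma> x\<bar>" .
  have "0 \<le> L * \<bar>x\<bar>" using assms by (simp add: L_def)
  then have "(L * \<bar>x\<bar>)\<^sup>2 \<le> (\<bar>\<sigma> x\<bar>)\<^sup>2" using h by (intro power_mono) auto
  then show ?thesis by (simp add: L_def power_mult_distrib)
qed

context wsetup begin

lemma Hpos:
  assumes u0nn: "\<And>x. 0 \<le> u0 x" and v0nn: "\<And>x. 0 \<le> v0 x" and lsc: "lsc_real u0"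
    and ex: "u0 x0 > 0" and \<kappa>: "0 < \<kappa>" and \<alpha>: "0 < \<alpha>" "\<alpha> < \<kappa>" and \<beta>: "0 < \<beta>"
  shows "(\<integral>\<^sup>+t. indicator {0..} t * ennreal (exp (- \<beta> * t)) * (\<integral>\<^sup>+x. indicator {0..} (x - \<alpha> * t) * mm (t, x) \<partial>lborel) \<partial>lborel) \<noteq> 0"
proof -
  define c0 where "c0 = u0 x0 / 2"
  have c0: "0 < c0" using ex by (simp add: c0_def)
  have "c0 < u0 x0" using ex by (simp add: c0_def)
  then have "\<forall>\<^sub>F y in at x0. c0 < u0 y" using lsc unfolding lsc_real_def by blast
  then obtain r where r: "0 < r" "\<And>y. y \<noteq> x0 \<Longrightarrow> dist y x0 < r \<Longrightarrow> c0 < u0 y"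
    unfolding eventually_at by auto
  have near: "c0 < u0 y" if "\<bar>y - x0\<bar> < r" for y
    using r that ex by (cases "y = x0") (auto simp: c0_def dist_real_def)
  have Ivlow: "c0 / 2 \<le> Iv t x" if "0 \<le> t" "\<bar>x - \<kappa> * t - x0\<bar> < r" for t x
  proof -
    define V where "V = (LINT y:{x - \<kappa> * t .. x + \<kappa> * t}|lborel. v0 y)"
    have "0 \<le> V"
      unfolding V_def set_lebesgue_integral_def using v0nn by (intro Bochner_Integration.integral_nonneg) (simp add: indicator_def)
    then have h: "0 \<le> 1 / (2 * \<kappa>) * V" using \<kappa> by simp
    have b: "c0 < u0 (x - \<kappa> * t)" using near that by simp
    have a: "0 \<le> u0 (x + \<kappa> * t)" by (rule u0nn)
    have e: "Iv t x = (u0 (x + \<kappa> * t) + u0 (x - \<kappa> * t)) / 2 + 1 / (2 * \<kappa>) * V"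
      unfolding V_def by (rule Iv_def)
    have gen: "c0 / 2 \<le> (A + B) / 2 + H" if "0 \<le> A" "c0 < B" "0 \<le> H" for A B H :: real
      using that by (simp add: field_simps)
    show ?thesis unfolding e by (rule gen[OF a b h])
  qed
  define T0 where "T0 = max 0 ((r - x0) / (\<kappa> - \<alpha>))"
  define C where "C = exp (- \<beta> * (T0 + 1)) * (c0\<^sup>2 / 4 * (2 * r))"
  have Cp: "0 < C" using c0 r by (simp add: C_def)
  have pw: "indicator {T0..T0+1} t * ennreal C \<le> indicator {0..} t * ennreal (exp (- \<beta> * t)) * (\<integral>\<^sup>+x. indicator {0..} (x - \<alpha> * t) * mm (t, x) \<partial>lborel)" for t
  proof (cases "t \<in> {T0..T0+1}")
    case True
    then have t0: "0 \<le> t" "T0 \<le> t" "t \<le> T0 + 1" by (auto simp: T0_def)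
    have tt: "(r - x0) / (\<kappa> - \<alpha>) \<le> t" using t0 by (simp add: T0_def)
    then have "r - x0 \<le> (\<kappa> - \<alpha>) * t" using \<alpha> by (simp add: field_simps)
    then have xa: "\<alpha> * t \<le> x0 + \<kappa> * t - r" by (simp add: algebra_simps)
    have inner: "ennreal (c0\<^sup>2 / 4 * (2 * r)) \<le> (\<integral>\<^sup>+x. indicator {0..} (x - \<alpha> * t) * mm (t, x) \<partial>lborel)"
    proof -
      have "ennreal (c0\<^sup>2 / 4 * (2 * r)) = ennreal (c0\<^sup>2 / 4) * emeasure lborel {x0 + \<kappa> * t - r <..< x0 + \<kappa> * t + r}"
        using r c0 by (simp add: ennreal_mult[symmetric])
      also have "\<dots> = (\<integral>\<^sup>+x. ennreal (c0\<^sup>2 / 4) * indicator {x0 + \<kappa> * t - r <..< x0 + \<kappa> * t + r} x \<partial>lborel)"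
        by (simp add: nn_integral_cmult_indicator)
      also have "\<dots> \<le> (\<integral>\<^sup>+x. indicator {0..} (x - \<alpha> * t) * mm (t, x) \<partial>lborel)"
      proof (rule nn_integral_mono)
        fix x
        show "ennreal (c0\<^sup>2 / 4) * indicator {x0 + \<kappa> * t - r <..< x0 + \<kappa> * t + r} x \<le> indicator {0..} (x - \<alpha> * t) * mm (t, x)"
        proof (cases "x \<in> {x0 + \<kappa> * t - r <..< x0 + \<kappa> * t + r}")
          case True
          then have ax: "\<bar>x - \<kappa> * t - x0\<bar> < r" by auto
          have "c0 / 2 \<le> Iv t x" using Ivlow[OF t0(1) ax] .
          then have "(c0 / 2)\<^sup>2 \<le> (Iv t x)\<^sup>2" using c0 by (intro power_mono) auto
          then have "ennreal (c0\<^sup>2 / 4) \<le> ennreal ((Iv t x)\<^sup>2)" by (intro ennreal_leI) (simp add: power_divide)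
          also have "\<dots> \<le> mm (t, x)" using key_ineq(1)[OF t0(1)] .
          finally have "ennreal (c0\<^sup>2 / 4) \<le> mm (t, x)" .
          moreover have "0 \<le> x - \<alpha> * t" using True xa by auto
          ultimately show ?thesis using True by (simp add: indicator_def)
        next
          case False
          then show ?thesis by simp
        qed
      qed
      finally show ?thesis .
    qed
    have ex2: "ennreal (exp (- \<beta> * (T0 + 1))) \<le> ennreal (exp (- \<beta> * t))"
      using t0 \<beta> by (intro ennreal_leI) simp
    have "ennreal C = ennreal (exp (- \<beta> * (T0 + 1))) * ennreal (c0\<^sup>2 / 4 * (2 * r))"
      unfolding C_def using r by (intro ennreal_mult) auto
    also have "\<dots> \<le> ennreal (exp (- \<beta> * t)) * (\<integral>\<^sup>+x. indicator {0..} (x - \<alpha> * t) * mm (t, x) \<partial>lborel)"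
      by (rule mult_mono[OF ex2 inner]) auto
    finally show ?thesis using True t0 by (simp add: indicator_def)
  next
    case False
    then show ?thesis by simp
  qed
  have "ennreal C = (\<integral>\<^sup>+t. indicator {T0..T0+1} t * ennreal C \<partial>lborel)"
    by (subst nn_integral_multc) auto
  also have "\<dots> \<le> (\<integral>\<^sup>+t. indicator {0..} t * ennreal (exp (- \<beta> * t)) * (\<integral>\<^sup>+x. indicator {0..} (x - \<alpha> * t) * mm (t, x) \<partial>lborel) \<partial>lborel)"
    by (intro nn_integral_mono pw)
  finally show ?thesis using Cp by auto
qed

end

theorem proposition5p4:
  fixes M :: "'a measure" and F :: "real \<Rightarrow> 'a measure" and W :: "real \<Rightarrow> real \<Rightarrow> 'a \<Rightarrow> real"
    and \<kappa> \<alpha> \<beta> :: real and \<sigma> u0 v0 :: "real \<Rightarrow> real" and u :: "real \<Rightarrow> real \<Rightarrow> 'a \<Rightarrow> real"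
  assumes "brownian_sheet M F W"
    and "\<kappa> > 0"
    and "\<exists>L. L-lipschitz_on UNIV \<sigma>"
    and "\<sigma> 0 = 0"
    and "L_sigma \<sigma> > 0"
    and "u0 \<in> D_exp" and "v0 \<in> D_exp"
    and "emeasure lborel {x. u0 x > 0} > 0"
    and "\<forall>x. v0 x \<ge> 0"
    and "mild_solution M F W \<kappa> \<sigma> u0 v0 u"
    and "\<beta> > 0"
    and "0 < \<alpha>" and "\<alpha> < \<kappa> - 4 * \<beta>\<^sup>2 / (L_sigma \<sigma>)\<^sup>2"
  shows "M_ab M \<alpha> \<beta> u = \<infinity>"
proof -
  note A = assms
  define L where "L = L_sigma \<sigma>"
  have Lp: "0 < L" using A(5) by (simp add: L_def)
  interpret bsheet M F W by unfold_locales (rule A(1))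
  obtain Lc where "Lc-lipschitz_on UNIV \<sigma>" using A(3) by blast
  then have "continuous_on UNIV \<sigma>" by (rule lipschitz_on_continuous_on)
  then have \<sigma>m: "\<sigma> \<in> borel_measurable borel" by (rule borel_measurable_continuous_onI)
  have \<sigma>L: "L\<^sup>2 * x\<^sup>2 \<le> (\<sigma> x)\<^sup>2" for x unfolding L_def by (rule sigma_lower[OF A(5) A(4)])
  interpret wsetup M F W \<kappa> \<sigma> u0 v0 u L
    by unfold_locales (use A(10) \<sigma>m \<sigma>L in auto)
  have ka: "4 * \<beta>\<^sup>2 / L\<^sup>2 < \<kappa> - \<alpha>" using A(13) by (simp add: L_def)
  then have "4 * \<beta>\<^sup>2 < (\<kappa> - \<alpha>) * L\<^sup>2" using Lp by (simp add: divide_less_eq)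
  then have Dp: "0 < L\<^sup>2 / 4 * (\<kappa> - \<alpha>) - \<beta>\<^sup>2" by (simp add: field_simps)
  define D where "D = L\<^sup>2 / 4 * (\<kappa> - \<alpha>) - \<beta>\<^sup>2"
  define \<epsilon> where "\<epsilon> = min 1 (D / (4 * \<beta>\<^sup>2))"
  have \<epsilon>p: "0 < \<epsilon>" using Dp A(11) by (simp add: \<epsilon>_def D_def)
  have \<epsilon>1: "\<epsilon> \<le> 1" by (simp add: \<epsilon>_def)
  have \<epsilon>D: "\<epsilon> * (4 * \<beta>\<^sup>2) \<le> D" using A(11) by (simp add: \<epsilon>_def min_def field_simps split: if_splits)
  have "(1 + \<epsilon>)\<^sup>2 * \<beta>\<^sup>2 \<le> (1 + 3 * \<epsilon>) * \<beta>\<^sup>2"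
  proof (intro mult_right_mono)
    have "\<epsilon>\<^sup>2 \<le> \<epsilon>" using \<epsilon>p \<epsilon>1 by (simp add: power2_eq_square mult_le_cancel_left1)
    then show "(1 + \<epsilon>)\<^sup>2 \<le> 1 + 3 * \<epsilon>" by (simp add: power2_eq_square algebra_simps)
  qed simp
  also have "\<dots> < L\<^sup>2 / 4 * (\<kappa> - \<alpha>)"
  proof -
    have q: "0 < \<epsilon> * \<beta>\<^sup>2" using \<epsilon>p A(11) by simp
    have "3 * \<epsilon> * \<beta>\<^sup>2 < \<epsilon> * (4 * \<beta>\<^sup>2)" using q by simp
    then have "3 * \<epsilon> * \<beta>\<^sup>2 < D" using \<epsilon>D by (rule less_le_trans)
    then show ?thesis unfolding D_def by (simp add: algebra_simps)
  qed
  finally have ab: "(1 + \<epsilon>)\<^sup>2 * \<beta>\<^sup>2 < L\<^sup>2 / 4 * (\<kappa> - \<alpha>)" .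
  have \<alpha>\<kappa>: "\<alpha> < \<kappa>" using ka Lp by (smt (verit) divide_nonneg_nonneg zero_le_power2 mult_nonneg_nonneg)
  define H where "H = (\<integral>\<^sup>+t. indicator {0..} t * ennreal (exp (- \<beta> * t)) * (\<integral>\<^sup>+x. indicator {0..} (x - \<alpha> * t) * mm (t, x) \<partial>lborel) \<partial>lborel)"
  have u0nn: "0 \<le> u0 x" for x using A(6) by (simp add: D_exp_def)
  have lsc: "lsc_real u0" using A(6) by (simp add: D_exp_def)
  obtain x0 where x0: "u0 x0 > 0"
  proof -
    have "{x. u0 x > 0} \<noteq> {}"
    proof
      assume "{x. u0 x > 0} = {}"
      then have "emeasure lborel {x. u0 x > 0} = 0" by simp
      then show False using A(8) by simp
    qed
    then show ?thesis using that by auto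
  qed
  have H0: "H \<noteq> 0" unfolding H_def
    by (rule Hpos[OF u0nn _ lsc x0 A(2) A(12) \<alpha>\<kappa> A(11)]) (use A(9) in auto)
  have Hinf: "H = \<infinity>" unfolding H_def
  proof (rule AN[OF mm_meas A(12) \<alpha>\<kappa> A(11) _ ab])
    show "0 < (1 + \<epsilon>)\<^sup>2" using \<epsilon>p by simp
    show "\<And>t x. 0 \<le> t \<Longrightarrow> ennreal (L\<^sup>2 / 4) * (\<integral>\<^sup>+s. \<integral>\<^sup>+y. indicator {0..t} s * indicator {0..} (y - x + \<kappa> * (t - s)) *
         indicator {0..} (x + \<kappa> * (t - s) - y) * mm (s, y) \<partial>lborel \<partial>lborel) \<le> ennreal ((1 + \<epsilon>)\<^sup>2) * mm (t, x)"
      using key_ineq(2)[OF _ \<epsilon>p] unfolding K_def by blast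
  qed (use H0 in \<open>simp add: H_def\<close>)
  define IM where "IM = (\<integral>\<^sup>+ t \<in> {0..}. ennreal (exp (- \<beta> * t)) *
        (\<integral>\<^sup>+ x \<in> {x. \<alpha> * t \<le> \<bar>x\<bar>}. (\<integral>\<^sup>+ \<omega>. ennreal ((u t x \<omega>)\<^sup>2) \<partial>M) \<partial>lborel) \<partial>lborel)"
  have "H \<le> IM" unfolding H_def IM_def
  proof (rule nn_integral_mono)
    fix t :: real
    show "indicator {0..} t * ennreal (exp (- \<beta> * t)) * (\<integral>\<^sup>+x. indicator {0..} (x - \<alpha> * t) * mm (t, x) \<partial>lborel)
      \<le> ennreal (exp (- \<beta> * t)) * (\<integral>\<^sup>+ x \<in> {x. \<alpha> * t \<le> \<bar>x\<bar>}. (\<integral>\<^sup>+ \<omega>. ennreal ((u t x \<omega>)\<^sup>2) \<partial>M) \<partial>lborel) * indicator {0..} t"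
    proof (cases "0 \<le> t")
      case True
      have "(\<integral>\<^sup>+x. indicator {0..} (x - \<alpha> * t) * mm (t, x) \<partial>lborel) \<le>
          (\<integral>\<^sup>+ x \<in> {x. \<alpha> * t \<le> \<bar>x\<bar>}. (\<integral>\<^sup>+ \<omega>. ennreal ((u t x \<omega>)\<^sup>2) \<partial>M) \<partial>lborel)"
      proof (rule nn_integral_mono)
        fix x :: real
        show "indicator {0..} (x - \<alpha> * t) * mm (t, x) \<le> (\<integral>\<^sup>+ \<omega>. ennreal ((u t x \<omega>)\<^sup>2) \<partial>M) * indicator {x. \<alpha> * t \<le> \<bar>x\<bar>} x"
        proof (cases "0 \<le> x - \<alpha> * t")
          case True2: True
          have "0 \<le> \<alpha> * t" using True A(12) by simp
          then have "\<alpha> * t \<le> \<bar>x\<bar>" using True2 by simp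
          moreover have "mm (t, x) = (\<integral>\<^sup>+ \<omega>. ennreal ((u t x \<omega>)\<^sup>2) \<partial>M)" using True by (simp add: mm_def ut_def)
          ultimately show ?thesis using True2 by (simp add: indicator_def)
        next
          case False
          then show ?thesis by (simp add: indicator_def)
        qed
      qed
      then show ?thesis using True by (simp add: mult_left_mono)
    next
      case False
      then show ?thesis by simp
    qed
  qed
  then have "IM = \<infinity>" using Hinf by (simp add: top_unique)
  then show ?thesis unfolding M_ab_def Let_def IM_def by simp
qed

end
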